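(* Let $k$, $t$ and $\lambda$ be positive integers such that $k \geq t+1$ and $t\geq 2$, and let $\alpha$ be the unique positive real number satisfying \[ \frac{\lambda(2^{t+1}-1)}{t!}\,\alpha^t+2\left(\frac{e\lambda(t+1)(2^{t+1}-1)}{t!}\right)^{1/t}\alpha=1, \] where $e$ is the base of the natural logarithm. Then for every integer $n \geq k$, every partial $(n,k,t)_\lambda$-system has a cyclically $\ell$-good sequencing for each positive integer $\ell \leq \alpha n^{1/t}$.
   Context: For positive integers $n,k,t,\lambda$ with $n \geq k > t \geq 2$, a partial $(n,k,t)_\lambda$-system is a pair $(X,\mathcal{B})$ where $X$ is an $n$-set of vertices and $\mathcal{B}$ is a collection of $k$-subsets of $X$ (blocks) such that each $t$-subset of $X$ is contained in at most $\lambda$ blocks. An independent set is a subset $Y\subseteq X$ containing no block. Let $\mathbb{Z}_n=\{0,\ldots,n-1\}$ be the cyclic group of order $n$. A sequencing is a bijection $\varphi:\mathbb{Z}_n\to X$. A set $S\subseteq X$ is cyclically consecutive if $S=\{\varphi(i),\varphi(i+1),\ldots,\varphi(i+|S|-1)\}$ for some $i\in\mathbb{Z}_n$ (addition in $\mathbb{Z}_n$). For a positive integer $\ell$, a sequencing is cyclically $\ell$-good if every set of $\ell$ cyclically consecutive vertices is an independent set. *)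

theory Defs
  imports "HOL-Analysis.Analysis"
begin

definition partial_system :: "nat \<Rightarrow> nat \<Rightarrow> nat \<Rightarrow> 'a set \<Rightarrow> 'a set set \<Rightarrow> bool" where
  "partial_system k t lam X \<B> \<longleftrightarrow>
     finite X \<and> (\<forall>B\<in>\<B>. B \<subseteq> X \<and> card B = k) \<and>
     (\<forall>T. T \<subseteq> X \<and> card T = t \<longrightarrow> card {B\<in>\<B>. T \<subseteq> B} \<le> lam)"

definition independent_set :: "'a set set \<Rightarrow> 'a set \<Rightarrow> bool" where
  "independent_set \<B> Y \<longleftrightarrow> (\<forall>B\<in>\<B>. \<not> B \<subseteq> Y)"

definition sequencing :: "nat \<Rightarrow> 'a set \<Rightarrow> (nat \<Rightarrow> 'a) \<Rightarrow> bool" where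
  "sequencing n X \<phi> \<longleftrightarrow> bij_betw \<phi> {0..<n} X"

definition cyc_consecutive :: "nat \<Rightarrow> (nat \<Rightarrow> 'a) \<Rightarrow> 'a set \<Rightarrow> bool" where
  "cyc_consecutive n \<phi> S \<longleftrightarrow>
     (\<exists>i<n. S = (\<lambda>j. \<phi> ((i + j) mod n)) ` {0..<card S})"

definition cyclically_good :: "nat \<Rightarrow> 'a set set \<Rightarrow> (nat \<Rightarrow> 'a) \<Rightarrow> nat \<Rightarrow> bool" where
  "cyclically_good n \<B> \<phi> l \<longleftrightarrow>
     (\<forall>S. card S = l \<and> cyc_consecutive n \<phi> S \<longrightarrow> independent_set \<B> S)"

end

theory Submission
  imports Defs "HOL-Combinatorics.Multiset_Permutations"
begin

definition Om :: "'a set \<Rightarrow> nat \<Rightarrow> ('a \<Rightarrow> nat) set" where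
  "Om X M = PiE X (\<lambda>_. {0..<M})"

definition detd :: "'a set \<Rightarrow> nat \<Rightarrow> 'a set \<Rightarrow> ('a \<Rightarrow> nat) set \<Rightarrow> bool" where
  "detd X M S A \<longleftrightarrow> A \<subseteq> Om X M \<and>
     (\<forall>c\<in>Om X M. \<forall>c'\<in>Om X M. restrict c S = restrict c' S \<longrightarrow> c \<in> A \<longrightarrow> c' \<in> A)"

lemma restrict_pair_bij:
  assumes "S \<subseteq> X"
  shows "bij_betw (\<lambda>c. (restrict c S, restrict c (X - S))) (PiE X (\<lambda>_. V))
           (PiE S (\<lambda>_. V) \<times> PiE (X - S) (\<lambda>_. V))"
proof (rule bij_betw_imageI)
  show "inj_on (\<lambda>c. (restrict c S, restrict c (X - S))) (PiE X (\<lambda>_. V))"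
  proof (rule inj_onI)
    fix c c' assume c: "c \<in> PiE X (\<lambda>_. V)" and c': "c' \<in> PiE X (\<lambda>_. V)"
      and eq: "(restrict c S, restrict c (X - S)) = (restrict c' S, restrict c' (X - S))"
    show "c = c'"
    proof
      fix x
      show "c x = c' x"
      proof (cases "x \<in> X")
        case True
        then show ?thesis using eq
          by (cases "x \<in> S") (metis Pair_inject restrict_apply', metis DiffI Pair_inject restrict_apply')
      next
        case False
        then show ?thesis using c c' by (auto simp: PiE_def extensional_def)
      qed
    qed
  qed
next
  show "(\<lambda>c. (restrict c S, restrict c (X - S))) ` PiE X (\<lambda>_. V) = PiE S (\<lambda>_. V) \<times> PiE (X - S) (\<lambda>_. V)"
  proof
    show "(\<lambda>c. (restrict c S, restrict c (X - S))) ` PiE X (\<lambda>_. V) \<subseteq> PiE S (\<lambda>_. V) \<times> PiE (X - S) (\<lambda>_. V)"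
      using assms by (auto simp: PiE_def Pi_def)
  next
    show "PiE S (\<lambda>_. V) \<times> PiE (X - S) (\<lambda>_. V) \<subseteq> (\<lambda>c. (restrict c S, restrict c (X - S))) ` PiE X (\<lambda>_. V)"
    proof
      fix fg assume fg: "fg \<in> PiE S (\<lambda>_. V) \<times> PiE (X - S) (\<lambda>_. V)"
      obtain f g where fgd: "fg = (f, g)" by (cases fg)
      define c where "c = (\<lambda>x. if x \<in> S then f x else g x)"
      have f: "f \<in> PiE S (\<lambda>_. V)" and g: "g \<in> PiE (X - S) (\<lambda>_. V)" using fg fgd by auto
      have "c \<in> PiE X (\<lambda>_. V)"
        using f g assms unfolding c_def by (auto simp: PiE_def Pi_def extensional_def)
      moreover have "restrict c S = f"
        using f unfolding c_def by (auto simp: PiE_def extensional_def restrict_def)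
      moreover have "restrict c (X - S) = g"
        using g unfolding c_def by (auto simp: PiE_def extensional_def restrict_def)
      ultimately show "fg \<in> (\<lambda>c. (restrict c S, restrict c (X - S))) ` PiE X (\<lambda>_. V)"
        using fgd by force
    qed
  qed
qed

lemma card_split:
  assumes "S \<subseteq> X" "P \<subseteq> PiE S (\<lambda>_. V)" "Q \<subseteq> PiE (X - S) (\<lambda>_. V)"
  shows "card {c \<in> PiE X (\<lambda>_. V). restrict c S \<in> P \<and> restrict c (X - S) \<in> Q} = card P * card Q"
proof -
  let ?f = "\<lambda>c. (restrict c S, restrict c (X - S))"
  let ?C = "{c \<in> PiE X (\<lambda>_. V). restrict c S \<in> P \<and> restrict c (X - S) \<in> Q}"
  have b: "bij_betw ?f (PiE X (\<lambda>_. V)) (PiE S (\<lambda>_. V) \<times> PiE (X - S) (\<lambda>_. V))"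
    by (rule restrict_pair_bij[OF assms(1)])
  have "bij_betw ?f ?C (?f ` ?C)"
    by (rule bij_betw_subset[OF b]) auto
  moreover have "?f ` ?C = P \<times> Q"
  proof
    show "?f ` ?C \<subseteq> P \<times> Q" by auto
    show "P \<times> Q \<subseteq> ?f ` ?C"
    proof
      fix pq assume "pq \<in> P \<times> Q"
      then have "pq \<in> PiE S (\<lambda>_. V) \<times> PiE (X - S) (\<lambda>_. V)" using assms by auto
      then have "pq \<in> ?f ` (PiE X (\<lambda>_. V))" using b unfolding bij_betw_def by simp
      then obtain c where c: "c \<in> PiE X (\<lambda>_. V)" and cpq: "pq = ?f c" by (rule imageE)
      have "c \<in> ?C" using c cpq \<open>pq \<in> P \<times> Q\<close> by auto
      then show "pq \<in> ?f ` ?C" using cpq by (rule_tac image_eqI[where f="?f"]) auto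
    qed
  qed
  ultimately show ?thesis by (simp add: bij_betw_same_card card_cartesian_product)
qed
lemma detd_repr:
  assumes "detd X M S A"
  shows "A = {c \<in> Om X M. restrict c S \<in> (\<lambda>c. restrict c S) ` A}"
proof
  show "A \<subseteq> {c \<in> Om X M. restrict c S \<in> (\<lambda>c. restrict c S) ` A}"
    using assms unfolding detd_def by auto
next
  show "{c \<in> Om X M. restrict c S \<in> (\<lambda>c. restrict c S) ` A} \<subseteq> A"
  proof
    fix c assume "c \<in> {c \<in> Om X M. restrict c S \<in> (\<lambda>c. restrict c S) ` A}"
    then obtain c' where c: "c \<in> Om X M" and c': "c' \<in> A" and e: "restrict c' S = restrict c S" by auto
    have "c' \<in> Om X M" using c' assms unfolding detd_def by auto
    then show "c \<in> A" using assms c c' e unfolding detd_def by metis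
  qed
qed



lemma indep_card:
  assumes "S \<subseteq> X" "detd X M S A" "detd X M (X - S) G"
  shows "card (A \<inter> G) * card (Om X M) = card A * card G"
proof -
  let ?V = "{0..<M}"
  let ?P = "(\<lambda>c. restrict c S) ` A"
  let ?Q = "(\<lambda>c. restrict c (X - S)) ` G"
  have A0: "A \<subseteq> PiE X (\<lambda>_. ?V)" and G0: "G \<subseteq> PiE X (\<lambda>_. ?V)"
    using assms unfolding detd_def Om_def by auto
  have P: "?P \<subseteq> PiE S (\<lambda>_. ?V)"
  proof
    fix f assume "f \<in> ?P"
    then obtain c where c: "c \<in> A" and fc: "f = restrict c S" by auto
    have "c \<in> PiE X (\<lambda>_. ?V)" using A0 c by (rule subsetD)
    then show "f \<in> PiE S (\<lambda>_. ?V)" using fc assms(1) by (auto simp: PiE_iff)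
  qed
  have Q: "?Q \<subseteq> PiE (X - S) (\<lambda>_. ?V)"
  proof
    fix f assume "f \<in> ?Q"
    then obtain c where c: "c \<in> G" and fc: "f = restrict c (X - S)" by auto
    have "c \<in> PiE X (\<lambda>_. ?V)" using G0 c by (rule subsetD)
    then show "f \<in> PiE (X - S) (\<lambda>_. ?V)" using fc by (auto simp: PiE_iff)
  qed
  have PS: "PiE S (\<lambda>_. ?V) \<subseteq> PiE S (\<lambda>_. ?V)" by simp
  have QS: "PiE (X - S) (\<lambda>_. ?V) \<subseteq> PiE (X - S) (\<lambda>_. ?V)" by simp
  have rS: "restrict c S \<in> PiE S (\<lambda>_. ?V)" if "c \<in> PiE X (\<lambda>_. ?V)" for c
    using that assms(1) by (auto simp: PiE_def Pi_def)
  have rT: "restrict c (X - S) \<in> PiE (X - S) (\<lambda>_. ?V)" if "c \<in> PiE X (\<lambda>_. ?V)" for c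
    using that by (auto simp: PiE_def Pi_def)
  have eA: "A = {c \<in> PiE X (\<lambda>_. ?V). restrict c S \<in> ?P \<and> restrict c (X - S) \<in> PiE (X - S) (\<lambda>_. ?V)}"
    apply (subst detd_repr[OF assms(2)]) using rT unfolding Om_def by auto
  have eG: "G = {c \<in> PiE X (\<lambda>_. ?V). restrict c S \<in> PiE S (\<lambda>_. ?V) \<and> restrict c (X - S) \<in> ?Q}"
    apply (subst detd_repr[OF assms(3)]) using rS unfolding Om_def by auto
  have eAG: "A \<inter> G = {c \<in> PiE X (\<lambda>_. ?V). restrict c S \<in> ?P \<and> restrict c (X - S) \<in> ?Q}"
  proof -
    have "A \<inter> G = {c \<in> PiE X (\<lambda>_. ?V). restrict c S \<in> ?P \<and> restrict c (X - S) \<in> PiE (X - S) (\<lambda>_. ?V)}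
       \<inter> {c \<in> PiE X (\<lambda>_. ?V). restrict c S \<in> PiE S (\<lambda>_. ?V) \<and> restrict c (X - S) \<in> ?Q}"
      using eA eG by simp
    also have "\<dots> = {c \<in> PiE X (\<lambda>_. ?V). restrict c S \<in> ?P \<and> restrict c (X - S) \<in> ?Q}"
      using P Q by blast
    finally show ?thesis .
  qed
  have eO: "Om X M = {c \<in> PiE X (\<lambda>_. ?V). restrict c S \<in> PiE S (\<lambda>_. ?V) \<and> restrict c (X - S) \<in> PiE (X - S) (\<lambda>_. ?V)}"
    using rS rT unfolding Om_def by auto
  have "card (A \<inter> G) = card ?P * card ?Q"
    by (subst eAG, rule card_split[OF assms(1) P Q])
  moreover have "card (Om X M) = card (PiE S (\<lambda>_. ?V)) * card (PiE (X - S) (\<lambda>_. ?V))"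
    by (subst eO, rule card_split[OF assms(1) PS QS])
  moreover have "card A = card ?P * card (PiE (X - S) (\<lambda>_. ?V))"
    by (subst eA, rule card_split[OF assms(1) P QS])
  moreover have "card G = card (PiE S (\<lambda>_. ?V)) * card ?Q"
    by (subst eG, rule card_split[OF assms(1) PS Q])
  ultimately show ?thesis by (simp add: algebra_simps)
qed

definition Gs :: "'a set \<Rightarrow> nat \<Rightarrow> ('i \<Rightarrow> ('a \<Rightarrow> nat) set) \<Rightarrow> 'i set \<Rightarrow> ('a \<Rightarrow> nat) set" where
  "Gs X M Ev J = Om X M - (\<Union>j\<in>J. Ev j)"

lemma finite_Om: "finite X \<Longrightarrow> finite (Om X M)"
  unfolding Om_def by (rule finite_PiE) auto

lemma Om_nonempty: "0 < M \<Longrightarrow> Om X M \<noteq> {}"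
  unfolding Om_def by (auto simp: PiE_eq_empty_iff)

lemma LLL:
  fixes X :: "'a set" and M :: nat and I :: "'i set" and Ev :: "'i \<Rightarrow> ('a \<Rightarrow> nat) set"
    and Sc :: "'i \<Rightarrow> 'a set" and p x :: real and d :: nat
  assumes finX: "finite X" and finI: "finite I" and M: "0 < M"
    and ev: "\<And>i. i \<in> I \<Longrightarrow> Sc i \<subseteq> X \<and> detd X M (Sc i) (Ev i)"
    and pr: "\<And>i. i \<in> I \<Longrightarrow> real (card (Ev i)) \<le> p * real (card (Om X M))"
    and nb: "\<And>i. i \<in> I \<Longrightarrow> card {j\<in>I. j \<noteq> i \<and> Sc j \<inter> Sc i \<noteq> {}} \<le> d"
    and x0: "0 \<le> x" and x1: "x < 1" and px: "p \<le> x * (1 - x) ^ d"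
  shows "Gs X M Ev I \<noteq> {}"
proof -
  let ?G = "Gs X M Ev"
  let ?O = "Om X M"
  have finO: "finite ?O" by (rule finite_Om[OF finX])
  have Opos: "card ?O > 0" using finO Om_nonempty[OF M] by (simp add: card_gt_0_iff)
  have finG: "finite (?G J)" for J unfolding Gs_def using finO by auto
  define claim where "claim J \<longleftrightarrow> (\<forall>i\<in>I - J. real (card (Ev i \<inter> ?G J)) \<le> x * real (card (?G J)))" for J
  have one: "real (card (?G (insert j J))) \<ge> (1 - x) * real (card (?G J))"
    if "claim J" "j \<in> I - J" for J j
  proof -
    have e: "?G (insert j J) = ?G J - Ev j" unfolding Gs_def by auto
    have "card (?G J - Ev j) = card (?G J) - card (?G J \<inter> Ev j)"
      by (rule card_Diff_subset_Int) (use finG in auto)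
    moreover have "card (?G J \<inter> Ev j) \<le> card (?G J)" by (rule card_mono[OF finG]) auto
    ultimately have "real (card (?G (insert j J))) = real (card (?G J)) - real (card (Ev j \<inter> ?G J))"
      using e by (simp add: Int_commute of_nat_diff)
    moreover have "real (card (Ev j \<inter> ?G J)) \<le> x * real (card (?G J))"
      using that unfolding claim_def by auto
    ultimately show ?thesis by (simp add: algebra_simps)
  qed
  have chain: "real (card (?G (L \<union> K))) \<ge> (1 - x) ^ card K * real (card (?G L))"
    if L: "L \<subseteq> I" and K: "K \<subseteq> I" "L \<inter> K = {}"
      and cl: "\<And>J. J \<subseteq> I \<Longrightarrow> card J < card (L \<union> K) \<Longrightarrow> claim J" for L K
  proof -
    have fK: "finite K" using K finI finite_subset by blast
    have fL: "finite L" using L finI finite_subset by blast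
    have "\<And>K'. K' \<subseteq> K \<Longrightarrow> real (card (?G (L \<union> K'))) \<ge> (1 - x) ^ card K' * real (card (?G L))"
    proof -
      fix K' assume "K' \<subseteq> K"
      then have fK': "finite K'" using fK finite_subset by blast
      show "K' \<subseteq> K \<Longrightarrow> real (card (?G (L \<union> K'))) \<ge> (1 - x) ^ card K' * real (card (?G L))"
        using fK'
      proof (induction K' rule: finite_induct)
        case empty
        then show ?case by simp
      next
        case (insert j K')
        have jn: "j \<notin> L \<union> K'" using insert K by auto
        have sub: "L \<union> K' \<subseteq> I" using insert L K by auto
        have "card (L \<union> K') < card (L \<union> insert j K')"
          using jn fL insert(1) by (simp add: psubset_card_mono)
        also have "\<dots> \<le> card (L \<union> K)" using insert(4) fL fK by (intro card_mono) auto
        finally have "claim (L \<union> K')" using cl sub by auto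
        moreover have "j \<in> I - (L \<union> K')" using jn insert K by auto
        ultimately have "real (card (?G (insert j (L \<union> K')))) \<ge> (1 - x) * real (card (?G (L \<union> K')))"
          by (rule one)
        moreover have "real (card (?G (L \<union> K'))) \<ge> (1 - x) ^ card K' * real (card (?G L))"
          using insert by auto
        moreover have "L \<union> insert j K' = insert j (L \<union> K')" by auto
        moreover have "card (insert j K') = Suc (card K')" using insert by simp
        ultimately show ?case using x1
          by (smt (verit, ccfv_SIG) mult.assoc mult_left_mono power_Suc)
      qed
    qed
    then show ?thesis by blast
  qed
  have main: "\<And>J. J \<subseteq> I \<Longrightarrow> card J < m \<Longrightarrow> claim J" for m
  proof (induction m)
    case 0
    then show ?case by simp
  next
    case (Suc m)
    fix J assume JI: "J \<subseteq> I" and cJ: "card J < Suc m"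
    have fJ: "finite J" using JI finI finite_subset by blast
    have IH: "\<And>J'. J' \<subseteq> I \<Longrightarrow> card J' < card J \<Longrightarrow> claim J'"
      using Suc.IH cJ by auto
    show "claim J" unfolding claim_def
    proof
      fix i assume i: "i \<in> I - J"
      define J1 where "J1 = {j\<in>J. Sc j \<inter> Sc i \<noteq> {}}"
      define J2 where "J2 = J - J1"
      have J12: "J2 \<union> J1 = J" "J2 \<inter> J1 = {}" unfolding J1_def J2_def by auto
      have Sci: "Sc i \<subseteq> X" "detd X M (Sc i) (Ev i)" using ev i by auto
      have dG: "detd X M (X - Sc i) (?G J2)"
        unfolding detd_def
      proof (intro conjI ballI impI)
        show "?G J2 \<subseteq> ?O" unfolding Gs_def by auto
      next
        fix c c' assume c: "c \<in> ?O" and c': "c' \<in> ?O"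
          and r: "restrict c (X - Sc i) = restrict c' (X - Sc i)" and cG: "c \<in> ?G J2"
        have "c' \<notin> Ev j" if j: "j \<in> J2" for j
        proof
          assume c'j: "c' \<in> Ev j"
          have jI: "j \<in> I" using j J2_def JI by auto
          have disj: "Sc j \<inter> Sc i = {}" using j unfolding J2_def J1_def by auto
          have SjX: "Sc j \<subseteq> X" and dj: "detd X M (Sc j) (Ev j)" using ev jI by auto
          have "restrict c' (Sc j) = restrict c (Sc j)"
          proof
            fix y
            show "restrict c' (Sc j) y = restrict c (Sc j) y"
            proof (cases "y \<in> Sc j")
              case True
              then have "y \<in> X - Sc i" using SjX disj by auto
              then have "c y = c' y" using r by (metis restrict_apply')
              then show ?thesis using True by simp
            qed simp
          qed
          then have "c \<in> Ev j" using dj c c' c'j unfolding detd_def by metis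
          then show False using cG j unfolding Gs_def by auto
        qed
        then show "c' \<in> ?G J2" using c' unfolding Gs_def by auto
      qed
      have ind: "card (Ev i \<inter> ?G J2) * card ?O = card (Ev i) * card (?G J2)"
        by (rule indep_card[OF Sci(1) Sci(2) dG])
      have a: "real (card (Ev i \<inter> ?G J2)) \<le> p * real (card (?G J2))"
      proof -
        have "real (card (Ev i \<inter> ?G J2)) * real (card ?O) = real (card (Ev i)) * real (card (?G J2))"
          using ind by (metis of_nat_mult)
        also have "\<dots> \<le> p * real (card ?O) * real (card (?G J2))"
          using pr[of i] i by (intro mult_right_mono) auto
        finally show ?thesis using Opos
          by (simp add: mult.commute mult.left_commute)
      qed
      have b: "card (Ev i \<inter> ?G J) \<le> card (Ev i \<inter> ?G J2)"
        by (rule card_mono) (use finG in \<open>auto simp: Gs_def J2_def\<close>)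
      have c0: "real (card (?G (J2 \<union> J1))) \<ge> (1 - x) ^ card J1 * real (card (?G J2))"
      proof (rule chain)
        show "J2 \<subseteq> I" "J1 \<subseteq> I" using JI unfolding J2_def J1_def by auto
        show "J2 \<inter> J1 = {}" by (rule J12(2))
        show "claim J'" if "J' \<subseteq> I" "card J' < card (J2 \<union> J1)" for J'
          using IH that J12(1) by simp
      qed
      have c: "real (card (?G J)) \<ge> (1 - x) ^ card J1 * real (card (?G J2))"
        using c0 J12(1) by simp
      have J1d: "card J1 \<le> d"
      proof -
        have "J1 \<subseteq> {j\<in>I. j \<noteq> i \<and> Sc j \<inter> Sc i \<noteq> {}}" using i JI unfolding J1_def by auto
        then have "card J1 \<le> card {j\<in>I. j \<noteq> i \<and> Sc j \<inter> Sc i \<noteq> {}}"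
          by (rule card_mono[rotated]) (use finI in auto)
        then show ?thesis using nb[of i] i by auto
      qed
      have "(1 - x) ^ d \<le> (1 - x) ^ card J1"
        by (rule power_decreasing[OF J1d]) (use x0 x1 in auto)
      then have c2: "real (card (?G J)) \<ge> (1 - x) ^ d * real (card (?G J2))"
        using c by (meson dual_order.trans mult_right_mono of_nat_0_le_iff)
      have "real (card (Ev i \<inter> ?G J)) \<le> p * real (card (?G J2))" using a b by linarith
      also have "\<dots> \<le> x * (1 - x) ^ d * real (card (?G J2))"
        using px by (intro mult_right_mono) auto
      also have "\<dots> \<le> x * real (card (?G J))"
        using c2 x0 by (simp add: mult.assoc mult_left_mono)
      finally show "real (card (Ev i \<inter> ?G J)) \<le> x * real (card (?G J))" .
    qed
  qed
  have "real (card (?G ({} \<union> I))) \<ge> (1 - x) ^ card I * real (card (?G {}))"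
    by (rule chain) (use main in auto)
  moreover have "?G {} = ?O" unfolding Gs_def by auto
  moreover have "(1 - x) ^ card I > 0" using x1 by auto
  ultimately have "real (card (?G I)) > 0" using Opos
    by (smt (verit) Un_empty_left mult_pos_pos of_nat_0_less_iff)
  then show ?thesis by auto
qed

lemma card_sub_containing:
  assumes "finite A" "v \<in> A" "1 \<le> t"
  shows "card {T. T \<subseteq> A \<and> v \<in> T \<and> card T = t} = (card A - 1) choose (t - 1)"
proof -
  have "bij_betw (\<lambda>T. T - {v}) {T. T \<subseteq> A \<and> v \<in> T \<and> card T = t} {U. U \<subseteq> A - {v} \<and> card U = t - 1}"
  proof (rule bij_betw_byWitness[where f'="\<lambda>U. insert v U"])
    show "\<forall>T\<in>{T. T \<subseteq> A \<and> v \<in> T \<and> card T = t}. insert v (T - {v}) = T" by auto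
    show "\<forall>U\<in>{U. U \<subseteq> A - {v} \<and> card U = t - 1}. insert v U - {v} = U" by auto
    show "(\<lambda>T. T - {v}) ` {T. T \<subseteq> A \<and> v \<in> T \<and> card T = t} \<subseteq> {U. U \<subseteq> A - {v} \<and> card U = t - 1}"
    proof
      fix U assume "U \<in> (\<lambda>T. T - {v}) ` {T. T \<subseteq> A \<and> v \<in> T \<and> card T = t}"
      then obtain T where T: "T \<subseteq> A" "v \<in> T" "card T = t" and U: "U = T - {v}" by auto
      have "finite T" using T(1) assms(1) finite_subset by blast
      then show "U \<in> {U. U \<subseteq> A - {v} \<and> card U = t - 1}" using T U by auto
    qed
    show "(\<lambda>U. insert v U) ` {U. U \<subseteq> A - {v} \<and> card U = t - 1} \<subseteq> {T. T \<subseteq> A \<and> v \<in> T \<and> card T = t}"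
    proof
      fix T assume "T \<in> (\<lambda>U. insert v U) ` {U. U \<subseteq> A - {v} \<and> card U = t - 1}"
      then obtain U where U: "U \<subseteq> A - {v}" "card U = t - 1" and T: "T = insert v U" by auto
      have "finite U" using U(1) assms(1) finite_subset by blast
      moreover have "v \<notin> U" using U by auto
      ultimately show "T \<in> {T. T \<subseteq> A \<and> v \<in> T \<and> card T = t}" using T U assms by auto
    qed
  qed
  then have "card {T. T \<subseteq> A \<and> v \<in> T \<and> card T = t} = card {U. U \<subseteq> A - {v} \<and> card U = t - 1}"
    by (rule bij_betw_same_card)
  also have "\<dots> = card (A - {v}) choose (t - 1)" using assms(1) by (intro n_subsets) auto
  also have "card (A - {v}) = card A - 1" using assms by simp
  finally show ?thesis .
qed

lemma deg_bound_nat: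
  assumes ps: "partial_system k t lam X \<B>" and kt: "t + 1 \<le> k" and t1: "1 \<le> t" and v: "v \<in> X"
  shows "card {B\<in>\<B>. v \<in> B} * ((k - 1) choose (t - 1)) \<le> lam * ((card X - 1) choose (t - 1))"
proof -
  have finX: "finite X" and Bs: "\<And>B. B \<in> \<B> \<Longrightarrow> B \<subseteq> X \<and> card B = k"
    and lamb: "\<And>T. T \<subseteq> X \<Longrightarrow> card T = t \<Longrightarrow> card {B\<in>\<B>. T \<subseteq> B} \<le> lam"
    using ps unfolding partial_system_def by auto
  have finB: "finite \<B>"
    by (rule finite_subset[of _ "Pow X"]) (use Bs finX in auto)
  define Bv where "Bv = {B\<in>\<B>. v \<in> B}"
  define Tv where "Tv = {T. T \<subseteq> X \<and> v \<in> T \<and> card T = t}"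
  have finBv: "finite Bv" unfolding Bv_def using finB by auto
  have finTv: "finite Tv" unfolding Tv_def
    by (rule finite_subset[of _ "Pow X"]) (use finX in auto)
  have one: "card {T\<in>Tv. T \<subseteq> B} = (k - 1) choose (t - 1)" if B: "B \<in> Bv" for B
  proof -
    have BX: "B \<subseteq> X" "card B = k" "v \<in> B" using B Bs unfolding Bv_def by auto
    have "{T\<in>Tv. T \<subseteq> B} = {T. T \<subseteq> B \<and> v \<in> T \<and> card T = t}" unfolding Tv_def using BX by auto
    moreover have "finite B" using BX finX finite_subset by blast
    ultimately show ?thesis using card_sub_containing[of B v t] BX t1 by simp
  qed
  have two: "card {B\<in>Bv. T \<subseteq> B} \<le> lam" if T: "T \<in> Tv" for T
  proof -
    have "card {B\<in>Bv. T \<subseteq> B} \<le> card {B\<in>\<B>. T \<subseteq> B}"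
      by (rule card_mono) (use finB in \<open>auto simp: Bv_def\<close>)
    also have "\<dots> \<le> lam" using T lamb unfolding Tv_def by auto
    finally show ?thesis .
  qed
  have "card Bv * ((k - 1) choose (t - 1)) = (\<Sum>B\<in>Bv. card {T\<in>Tv. T \<subseteq> B})"
    using one by simp
  also have "\<dots> = card (SIGMA B:Bv. {T\<in>Tv. T \<subseteq> B})"
    using finBv finTv by simp
  also have "\<dots> = card (SIGMA T:Tv. {B\<in>Bv. T \<subseteq> B})"
  proof -
    have "(SIGMA T:Tv. {B\<in>Bv. T \<subseteq> B}) = (\<lambda>(B, T). (T, B)) ` (SIGMA B:Bv. {T\<in>Tv. T \<subseteq> B})"
      by auto
    moreover have "inj_on (\<lambda>(B, T). (T, B)) (SIGMA B:Bv. {T\<in>Tv. T \<subseteq> B})"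
      by (rule inj_onI) auto
    ultimately show ?thesis by (simp add: card_image)
  qed
  also have "\<dots> = (\<Sum>T\<in>Tv. card {B\<in>Bv. T \<subseteq> B})"
    using finBv finTv by simp
  also have "\<dots> \<le> (\<Sum>T\<in>Tv. lam)" by (rule sum_mono) (use two in auto)
  also have "\<dots> = lam * card Tv" by simp
  also have "card Tv = (card X - 1) choose (t - 1)"
    unfolding Tv_def by (rule card_sub_containing[OF finX v t1])
  finally show ?thesis unfolding Bv_def .
qed

lemma deg_bound:
  assumes ps: "partial_system k t lam X \<B>" and kt: "t + 1 \<le> k" and t1: "1 \<le> t" and v: "v \<in> X"
  shows "card {B\<in>\<B>. v \<in> B} * fact t \<le> lam * card X ^ (t - 1)"
proof -
  let ?d = "card {B\<in>\<B>. v \<in> B}"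
  have "t \<le> (k - 1) choose (t - 1)"
  proof -
    have "Suc (t - 1) choose (t - 1) \<le> (k - 1) choose (t - 1)"
      by (rule binomial_right_mono) (use kt t1 in auto)
    moreover have "Suc (t - 1) choose (t - 1) = t" using t1 by (cases t) simp_all
    ultimately show ?thesis by simp
  qed
  then have "?d * t \<le> ?d * ((k - 1) choose (t - 1))" by simp
  also have "\<dots> \<le> lam * ((card X - 1) choose (t - 1))" by (rule deg_bound_nat[OF assms])
  finally have a: "?d * t * fact (t - 1) \<le> lam * ((card X - 1) choose (t - 1)) * fact (t - 1)"
    by (rule mult_right_mono) simp
  have "((card X - 1) choose (t - 1)) * fact (t - 1) \<le> (card X - 1) ^ (t - 1)"
    by (rule binomial_fact_pow)
  also have "\<dots> \<le> card X ^ (t - 1)" by (rule power_mono) auto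
  finally have b: "((card X - 1) choose (t - 1)) * fact (t - 1) \<le> card X ^ (t - 1)" .
  have "fact t = t * fact (t - 1)" using t1 by (cases t) simp_all
  then have "?d * fact t = ?d * t * fact (t - 1)" by simp
  also have "\<dots> \<le> lam * (((card X - 1) choose (t - 1)) * fact (t - 1))" using a by (simp add: mult.assoc)
  also have "\<dots> \<le> lam * card X ^ (t - 1)" using b by simp
  finally show ?thesis .
qed

lemma exp_bound: "(2::nat) \<le> D \<Longrightarrow> exp (-1) \<le> (1 - 1 / real D) ^ (D - 1)"
proof -
  assume D: "2 \<le> D"
  define m where "m = D - 1"
  have m: "0 < m" "real D = real m + 1" using D unfolding m_def by auto
  have "(1 + 1 / real m) ^ m \<le> exp 1"
    using exp_ge_one_plus_x_over_n_power_n[of m 1] m by simp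
  moreover have "(1 - 1 / real D) = 1 / (1 + 1 / real m)"
    using m by (simp add: field_simps)
  ultimately have "(1 - 1 / real D) ^ m \<ge> 1 / exp 1"
    by (simp add: power_one_over) (metis frac_le exp_gt_zero le_numeral_extra(4) zero_less_one zero_less_power add_pos_pos of_nat_0_less_iff divide_pos_pos m(1) zero_le_one)
  then show ?thesis unfolding m_def by (simp add: exp_minus inverse_eq_divide)
qed

definition sig :: "nat \<Rightarrow> 'a set \<Rightarrow> 'a set" where
  "sig s B = (SOME T. T \<subseteq> B \<and> card T = s)"

lemma sig: assumes "s \<le> card B" shows "sig s B \<subseteq> B \<and> card (sig s B) = s"
proof -
  obtain T where "T \<subseteq> B" "card T = s" using obtain_subset_with_card_n[OF assms] by metis
  then have "\<exists>T. T \<subseteq> B \<and> card T = s" by blast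
  then show ?thesis unfolding sig_def by (rule someI_ex)
qed

lemma suc_mod_ne: "a < M \<Longrightarrow> 2 \<le> M \<Longrightarrow> Suc a mod M \<noteq> a"
  by (cases "Suc a = M") auto

lemma card_pair_funs:
  assumes finS: "finite S" and neS: "S \<noteq> {}" and M: "2 \<le> M"
  shows "card {f \<in> PiE S (\<lambda>_. {0..<M}). \<exists>j<M. \<forall>v\<in>S. f v = j \<or> f v = Suc j mod M} \<le> M * (2 ^ card S - 1)"
proof -
  define F where "F j = PiE S (\<lambda>_. {j, Suc j mod M}) - {restrict (\<lambda>_. Suc j mod M) S}" for j
  let ?Q = "{f \<in> PiE S (\<lambda>_. {0..<M}). \<exists>j<M. \<forall>v\<in>S. f v = j \<or> f v = Suc j mod M}"
  have sub: "?Q \<subseteq> (\<Union>j\<in>{0..<M}. F j)"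
  proof
    fix f assume f: "f \<in> ?Q"
    then obtain j where j: "j < M" "\<forall>v\<in>S. f v = j \<or> f v = Suc j mod M"
      and fP: "f \<in> PiE S (\<lambda>_. {0..<M})" by auto
    show "f \<in> (\<Union>j\<in>{0..<M}. F j)"
    proof (cases "f = restrict (\<lambda>_. Suc j mod M) S")
      case False
      have "f \<in> PiE S (\<lambda>_. {j, Suc j mod M})" using fP j by (auto simp: PiE_iff)
      then have "f \<in> F j" using False unfolding F_def by auto
      then show ?thesis using j by auto
    next
      case True
      define j' where "j' = Suc j mod M"
      have j'M: "j' < M" using j M unfolding j'_def by auto
      have fj: "f = restrict (\<lambda>_. j') S" using True unfolding j'_def by simp
      have "f \<in> PiE S (\<lambda>_. {j', Suc j' mod M})" unfolding fj by (auto simp: PiE_iff)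
      moreover have "f \<noteq> restrict (\<lambda>_. Suc j' mod M) S"
      proof
        assume "f = restrict (\<lambda>_. Suc j' mod M) S"
        then have e: "restrict (\<lambda>_. j') S = restrict (\<lambda>_. Suc j' mod M) S" using fj by simp
        obtain v where v: "v \<in> S" using neS by auto
        have "j' = Suc j' mod M" using fun_cong[OF e, of v] v by simp
        then show False using suc_mod_ne[OF j'M M] by simp
      qed
      ultimately have "f \<in> F j'" unfolding F_def by auto
      then show ?thesis using j'M by auto
    qed
  qed
  have cF: "card (F j) = 2 ^ card S - 1" if jM: "j < M" for j
  proof -
    have ne: "j \<noteq> Suc j mod M" using suc_mod_ne[OF jM M] by simp
    have "card (PiE S (\<lambda>_. {j, Suc j mod M})) = 2 ^ card S"
      using finS ne by (simp add: card_PiE numeral_2_eq_2)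
    moreover have "restrict (\<lambda>_. Suc j mod M) S \<in> PiE S (\<lambda>_. {j, Suc j mod M})" by auto
    moreover have "finite (PiE S (\<lambda>_. {j, Suc j mod M}))" using finS by (intro finite_PiE) auto
    ultimately show ?thesis unfolding F_def by (simp add: card_Diff_singleton)
  qed
  have finF: "finite (\<Union>j\<in>{0..<M}. F j)" unfolding F_def using finS by (auto intro!: finite_PiE)
  have "card ?Q \<le> card (\<Union>j\<in>{0..<M}. F j)" by (rule card_mono[OF finF sub])
  also have "\<dots> \<le> (\<Sum>j\<in>{0..<M}. card (F j))" by (rule card_UN_le) simp
  also have "\<dots> = (\<Sum>j\<in>{0..<M}. 2 ^ card S - 1)" by (rule sum.cong) (auto simp: cF)
  also have "\<dots> = M * (2 ^ card S - 1)" by simp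
  finally show ?thesis .
qed

lemma coloring:
  fixes X :: "'a set"
  assumes ps: "partial_system k t lam X \<B>" and kt: "t + 1 \<le> k" and t1: "1 \<le> t" and M: "2 \<le> M"
    and cond: "exp 1 * ((2 ^ (t + 1) - 1) / real M ^ t) * (real (t + 1) * (real lam * real (card X) ^ (t - 1) / fact t)) \<le> 1"
  shows "\<exists>col. (\<forall>v\<in>X. col v < M) \<and> (\<forall>B\<in>\<B>. \<forall>j<M. \<not> B \<subseteq> {v\<in>X. col v = j \<or> col v = Suc j mod M})"
proof (cases "\<B> = {}")
  case True
  then show ?thesis using M by (intro exI[of _ "\<lambda>_. 0"]) auto
next
  case False
  have finX: "finite X" and Bs: "\<And>B. B \<in> \<B> \<Longrightarrow> B \<subseteq> X \<and> card B = k"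
    using ps unfolding partial_system_def by auto
  have finB: "finite \<B>"
    by (rule finite_subset[of _ "Pow X"]) (use Bs finX in auto)
  define n where "n = card X"
  define deg where "deg v = card {B\<in>\<B>. v \<in> B}" for v
  obtain B0 where B0: "B0 \<in> \<B>" using False by auto
  have cB0: "card B0 = k" "B0 \<subseteq> X" using Bs B0 by auto
  then obtain v0 where v0: "v0 \<in> B0" using kt by (metis card.empty ex_in_conv not_less_eq_eq add_leE le_zero_eq one_neq_zero)
  have v0X: "v0 \<in> X" using v0 cB0 by auto
  define Del where "Del = Max (deg ` X)"
  have degle: "deg v \<le> Del" if "v \<in> X" for v unfolding Del_def using that finX by auto
  have Del_in: "Del \<in> deg ` X" unfolding Del_def using finX v0X by (intro Max_in) auto
  have Del1: "1 \<le> Del"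
  proof -
    have "B0 \<in> {B\<in>\<B>. v0 \<in> B}" using B0 v0 by auto
    then have "1 \<le> deg v0" unfolding deg_def using finB
      by (metis (no_types, lifting) One_nat_def Suc_leI card_gt_0_iff empty_iff finite_subset mem_Collect_eq subsetI)
    then show ?thesis using degle[OF v0X] by linarith
  qed
  have Delb: "real Del * fact t \<le> real lam * real n ^ (t - 1)"
  proof -
    obtain v where v: "v \<in> X" "Del = deg v" using Del_in by auto
    have "deg v * fact t \<le> lam * card X ^ (t - 1)" unfolding deg_def by (rule deg_bound[OF ps kt t1 v(1)])
    then have "real (deg v * fact t) \<le> real (lam * card X ^ (t - 1))" by (simp only: of_nat_le_iff)
    then show ?thesis using v unfolding n_def by simp
  qed
  define D where "D = (t + 1) * Del"
  have D2: "2 \<le> D"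
  proof -
    have a: "(t + 1) * 1 \<le> (t + 1) * Del" using Del1 by (rule mult_le_mono2)
    have b: "2 \<le> (t + 1) * 1" using t1 by simp
    show ?thesis unfolding D_def using le_trans[OF b a] .
  qed
  define x :: real where "x = 1 / real D"
  define p :: real where "p = (2 ^ (t + 1) - 1) / real M ^ t"
  define d where "d = D - 1"
  define S where "S (B :: 'a set) = sig (t + 1) B" for B
  have SB: "S B \<subseteq> B \<and> card (S B) = t + 1" if "B \<in> \<B>" for B
    unfolding S_def by (rule sig) (use Bs[OF that] kt in auto)
  define Ev where "Ev (B :: 'a set) = {c \<in> Om X M. \<exists>j<M. \<forall>v\<in>S B. c v = j \<or> c v = Suc j mod M}" for B
  have res: "Gs X M Ev \<B> \<noteq> {}"
  proof (rule LLL[where Sc = S and p = p and x = x and d = d])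
    show "finite X" by (rule finX)
    show "finite \<B>" by (rule finB)
    show "0 < M" using M by simp
    show "S B \<subseteq> X \<and> detd X M (S B) (Ev B)" if B: "B \<in> \<B>" for B
    proof
      show "S B \<subseteq> X" using SB[OF B] Bs[OF B] by auto
      show "detd X M (S B) (Ev B)" unfolding detd_def
      proof (intro conjI ballI impI)
        show "Ev B \<subseteq> Om X M" unfolding Ev_def by auto
      next
        fix c c' assume c: "c \<in> Om X M" and c': "c' \<in> Om X M" and r: "restrict c (S B) = restrict c' (S B)"
          and cE: "c \<in> Ev B"
        obtain j where j: "j < M" "\<forall>v\<in>S B. c v = j \<or> c v = Suc j mod M" using cE unfolding Ev_def by auto
        have "\<forall>v\<in>S B. c' v = j \<or> c' v = Suc j mod M"
        proof
          fix v assume v: "v \<in> S B"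
          have "c v = c' v" using fun_cong[OF r, of v] v by simp
          then show "c' v = j \<or> c' v = Suc j mod M" using j v by auto
        qed
        then show "c' \<in> Ev B" unfolding Ev_def using c' j by auto
      qed
    qed
    show "real (card (Ev B)) \<le> p * real (card (Om X M))" if B: "B \<in> \<B>" for B
    proof -
      let ?V = "{0..<M}"
      let ?Q = "{f \<in> PiE (S B) (\<lambda>_. ?V). \<exists>j<M. \<forall>v\<in>S B. f v = j \<or> f v = Suc j mod M}"
      have SX: "S B \<subseteq> X" and cS: "card (S B) = t + 1" using SB[OF B] Bs[OF B] by auto
      have finS: "finite (S B)" using SX finX finite_subset by blast
      have neS: "S B \<noteq> {}" using cS by auto
      have eE: "Ev B = {c \<in> PiE X (\<lambda>_. ?V). restrict c (S B) \<in> ?Q \<and> restrict c (X - S B) \<in> PiE (X - S B) (\<lambda>_. ?V)}"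
      proof (rule set_eqI)
        fix c
        show "c \<in> Ev B \<longleftrightarrow> c \<in> {c \<in> PiE X (\<lambda>_. ?V). restrict c (S B) \<in> ?Q \<and> restrict c (X - S B) \<in> PiE (X - S B) (\<lambda>_. ?V)}"
        proof (cases "c \<in> PiE X (\<lambda>_. ?V)")
          case True
          have r1: "restrict c (S B) \<in> PiE (S B) (\<lambda>_. ?V)" using True SX by (auto simp: PiE_iff)
          have r2: "restrict c (X - S B) \<in> PiE (X - S B) (\<lambda>_. ?V)" using True by (auto simp: PiE_iff)
          have "(\<exists>j<M. \<forall>v\<in>S B. c v = j \<or> c v = Suc j mod M) \<longleftrightarrow>
                (\<exists>j<M. \<forall>v\<in>S B. restrict c (S B) v = j \<or> restrict c (S B) v = Suc j mod M)" by simp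
          then show ?thesis using True r1 r2 unfolding Ev_def Om_def by auto
        next
          case False
          then show ?thesis unfolding Ev_def Om_def by auto
        qed
      qed
      have QS: "?Q \<subseteq> PiE (S B) (\<lambda>_. ?V)" by auto
      have "card (Ev B) = card ?Q * card (PiE (X - S B) (\<lambda>_. ?V))"
        unfolding eE by (rule card_split[OF SX QS]) simp
      also have "card (PiE (X - S B) (\<lambda>_. ?V)) = M ^ (n - (t + 1))"
        using finX SX cS by (simp add: card_PiE card_Diff_subset finS n_def)
      finally have cE: "card (Ev B) = card ?Q * M ^ (n - (t + 1))" .
      have cQ: "card ?Q \<le> M * (2 ^ (t + 1) - 1)"
        using card_pair_funs[OF finS neS M] cS by simp
      have cO: "card (Om X M) = M ^ n" unfolding Om_def n_def using finX by (simp add: card_PiE)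
      have nt: "t + 1 \<le> n" unfolding n_def using cS SX finX card_mono by metis
      have "real (card (Ev B)) \<le> real (M * (2 ^ (t + 1) - 1) * M ^ (n - (t + 1)))"
        unfolding cE using cQ by (intro of_nat_mono mult_right_mono) auto
      also have "\<dots> = (2 ^ (t + 1) - 1) * real M ^ (n - t)"
      proof -
        have "n - t = Suc (n - (t + 1))" using nt by simp
        moreover have "real ((2::nat) ^ (t + 1) - 1) = 2 ^ (t + 1) - 1"
          by (simp add: of_nat_diff)
        ultimately show ?thesis by (simp add: algebra_simps)
      qed
      also have "\<dots> = p * real (card (Om X M))"
      proof -
        have "real M ^ n = real M ^ t * real M ^ (n - t)" using nt
          by (metis add_diff_inverse_nat not_less_eq_eq power_add add_leD1 not_less)
        moreover have "real M ^ t > 0" using M by simp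
        ultimately show ?thesis unfolding p_def cO using M by (simp add: field_simps)
      qed
      finally show ?thesis .
    qed
    show "card {j\<in>\<B>. j \<noteq> B \<and> S j \<inter> S B \<noteq> {}} \<le> d" if B: "B \<in> \<B>" for B
    proof -
      have SX: "S B \<subseteq> X" and cS: "card (S B) = t + 1" using SB[OF B] Bs[OF B] by auto
      have finS: "finite (S B)" using SX finX finite_subset by blast
      have sub: "{j\<in>\<B>. j \<noteq> B \<and> S j \<inter> S B \<noteq> {}} \<subseteq> (\<Union>v\<in>S B. {B'\<in>\<B>. v \<in> B'}) - {B}"
      proof
        fix B' assume "B' \<in> {j\<in>\<B>. j \<noteq> B \<and> S j \<inter> S B \<noteq> {}}"
        then have B': "B' \<in> \<B>" "B' \<noteq> B" "S B' \<inter> S B \<noteq> {}" by auto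
        then obtain v where "v \<in> S B'" "v \<in> S B" by auto
        then show "B' \<in> (\<Union>v\<in>S B. {B'\<in>\<B>. v \<in> B'}) - {B}" using SB[OF B'(1)] B' by auto
      qed
      have Bin: "B \<in> (\<Union>v\<in>S B. {B'\<in>\<B>. v \<in> B'})"
      proof -
        obtain v where "v \<in> S B" using cS by (metis card.empty ex_in_conv add_is_0 one_neq_zero)
        then show ?thesis using B SB[OF B] by auto
      qed
      have finU: "finite (\<Union>v\<in>S B. {B'\<in>\<B>. v \<in> B'})" by (rule finite_subset[OF _ finB]) auto
      have "card (\<Union>v\<in>S B. {B'\<in>\<B>. v \<in> B'}) \<le> (\<Sum>v\<in>S B. card {B'\<in>\<B>. v \<in> B'})"
        by (rule card_UN_le[OF finS])
      also have "\<dots> \<le> (\<Sum>v\<in>S B. Del)"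
        by (rule sum_mono) (use degle SX in \<open>auto simp: deg_def\<close>)
      also have "\<dots> = D" using cS unfolding D_def by simp
      finally have cU: "card (\<Union>v\<in>S B. {B'\<in>\<B>. v \<in> B'}) \<le> D" .
      have "card {j\<in>\<B>. j \<noteq> B \<and> S j \<inter> S B \<noteq> {}} \<le> card ((\<Union>v\<in>S B. {B'\<in>\<B>. v \<in> B'}) - {B})"
        by (rule card_mono[OF _ sub]) (use finU in auto)
      also have "\<dots> = card (\<Union>v\<in>S B. {B'\<in>\<B>. v \<in> B'}) - 1" using Bin finU by (simp add: card_Diff_singleton)
      also have "\<dots> \<le> d" using cU unfolding d_def by simp
      finally show ?thesis .
    qed
    show "0 \<le> x" unfolding x_def by simp
    show "x < 1" unfolding x_def using D2 by simp
    show "p \<le> x * (1 - x) ^ d"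
    proof -
      have e1: "exp (-1) \<le> (1 - x) ^ d" unfolding x_def d_def by (rule exp_bound[OF D2])
      have "real D \<le> real (t + 1) * (real lam * real n ^ (t - 1) / fact t)"
      proof -
        have "real D = real (t + 1) * real Del" unfolding D_def by (simp only: of_nat_mult)
        moreover have "real Del \<le> real lam * real n ^ (t - 1) / fact t"
          using Delb by (simp add: field_simps)
        ultimately show ?thesis by (metis mult_left_mono of_nat_0_le_iff)
      qed
      moreover have p0: "0 \<le> p"
      proof -
        have "(1::real) \<le> 2 ^ (t + 1)" by (rule one_le_power) simp
        then show ?thesis unfolding p_def by (intro divide_nonneg_nonneg) auto
      qed
      ultimately have "exp 1 * p * real D \<le> 1"
        using cond unfolding p_def n_def
        by (smt (verit, best) exp_gt_zero mult_left_mono mult_nonneg_nonneg)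
      then have "p \<le> exp (-1) / real D" using D2
        by (simp add: exp_minus field_simps)
      also have "\<dots> \<le> (1 - x) ^ d / real D" using e1 D2 by (simp add: divide_right_mono)
      also have "\<dots> = x * (1 - x) ^ d" unfolding x_def by simp
      finally show ?thesis .
    qed
  qed
  then obtain c where c: "c \<in> Om X M" "\<And>B. B \<in> \<B> \<Longrightarrow> c \<notin> Ev B" unfolding Gs_def by auto
  show ?thesis
  proof (intro exI[of _ c] conjI ballI allI impI)
    show "c v < M" if "v \<in> X" for v using c(1) that unfolding Om_def by (auto simp: PiE_iff)
  next
    fix B j assume B: "B \<in> \<B>" and j: "j < M"
    show "\<not> B \<subseteq> {v \<in> X. c v = j \<or> c v = Suc j mod M}"
    proof
      assume "B \<subseteq> {v \<in> X. c v = j \<or> c v = Suc j mod M}"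
      then have "\<forall>v\<in>S B. c v = j \<or> c v = Suc j mod M" using SB[OF B] by auto
      then have "c \<in> Ev B" unfolding Ev_def using c(1) j by auto
      then show False using c(2)[OF B] by simp
    qed
  qed
qed

lemma pow_diff_mono:
  fixes a b h :: real
  assumes "0 \<le> a" "a \<le> b" "0 \<le> h"
  shows "(a + h) ^ t - a ^ t \<le> (b + h) ^ t - b ^ t \<and> 0 \<le> (a + h) ^ t - a ^ t"
proof (induction t)
  case 0
  then show ?case by simp
next
  case (Suc t)
  have e: "(x + h) ^ Suc t - x ^ Suc t = (x + h) * ((x + h) ^ t - x ^ t) + h * x ^ t" for x :: real
    by (simp add: right_diff_distrib distrib_right)
  have i1: "(a + h) ^ t - a ^ t \<le> (b + h) ^ t - b ^ t" and i2: "0 \<le> (a + h) ^ t - a ^ t" using Suc.IH by auto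
  have "(a + h) * ((a + h) ^ t - a ^ t) \<le> (b + h) * ((b + h) ^ t - b ^ t)"
    by (rule mult_mono) (use i1 i2 assms in auto)
  moreover have "h * a ^ t \<le> h * b ^ t" using assms by (intro mult_left_mono power_mono) auto
  moreover have "0 \<le> (a + h) * ((a + h) ^ t - a ^ t)" using i2 assms by auto
  moreover have "0 \<le> h * a ^ t" using assms by auto
  ultimately show ?case unfolding e by linarith
qed

lemma three_pow_bound:
  fixes p q d l :: real
  assumes "0 \<le> p" "p \<le> l" "0 \<le> q" "q \<le> l" "0 \<le> d" "d \<le> l"
  shows "(p + d) ^ t + (q + d) ^ t - d ^ t \<le> (2 ^ (t + 1) - 1) * l ^ t"
proof -
  have A1: "(p + d) ^ t \<le> (l + d) ^ t" using assms by (intro power_mono) auto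
  have A2: "(q + d) ^ t \<le> (l + d) ^ t" using assms by (intro power_mono) auto
  have A3: "(l + d) ^ t \<le> (l + l) ^ t" using assms by (intro power_mono) auto
  have A4: "(d + l) ^ t - d ^ t \<le> (l + l) ^ t - l ^ t" using pow_diff_mono[of d l l t] assms by auto
  have A4': "(l + d) ^ t = (d + l) ^ t" by (simp add: add.commute)
  have A5: "(l + l) ^ t = 2 ^ t * l ^ t"
  proof -
    have "l + l = 2 * l" by simp
    then show ?thesis by (simp only: power_mult_distrib)
  qed
  have A6: "(2 ^ (t + 1) - 1) * l ^ t = 2 * (2 ^ t * l ^ t) - l ^ t" by (simp add: left_diff_distrib)
  show ?thesis unfolding A6 using A1 A2 A3 A4 A4' A5 by linarith
qed

lemma card_fam_lists:
  assumes fin1: "finite S1" and fin2: "finite S2" and D: "D \<subseteq> S1 \<inter> S2"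
  shows "fact t * card {T. card T = t \<and> (T \<subseteq> S1 \<or> T \<subseteq> S2)} + card D ^ t \<le> card S1 ^ t + card S2 ^ t"
proof -
  define Fam where "Fam = {T. card T = t \<and> (T \<subseteq> S1 \<or> T \<subseteq> S2)}"
  define LL where "LL = {xs. length xs = t \<and> distinct xs \<and> (set xs \<subseteq> S1 \<or> set xs \<subseteq> S2)}"
  define U1 where "U1 = {xs. set xs \<subseteq> S1 \<and> length xs = t}"
  define U2 where "U2 = {xs. set xs \<subseteq> S2 \<and> length xs = t}"
  define UD where "UD = {xs. set xs \<subseteq> D \<and> length xs = t}"
  have finD: "finite D" using D fin1 finite_subset by blast
  have finFam: "finite Fam" unfolding Fam_def
    by (rule finite_subset[of _ "Pow S1 \<union> Pow S2"]) (use fin1 fin2 in auto)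
  have fU1: "finite U1" unfolding U1_def by (rule finite_lists_length_eq[OF fin1])
  have fU2: "finite U2" unfolding U2_def by (rule finite_lists_length_eq[OF fin2])
  have LLe: "LL = (\<Union>T\<in>Fam. permutations_of_set T)"
  proof
    show "LL \<subseteq> (\<Union>T\<in>Fam. permutations_of_set T)"
    proof
      fix xs assume "xs \<in> LL"
      then have xs: "length xs = t" "distinct xs" "set xs \<subseteq> S1 \<or> set xs \<subseteq> S2" unfolding LL_def by auto
      have "card (set xs) = t" using distinct_card[OF xs(2)] xs(1) by simp
      then have "set xs \<in> Fam" unfolding Fam_def using xs(3) by simp
      moreover have "xs \<in> permutations_of_set (set xs)" using xs by (simp add: permutations_of_set_def)
      ultimately show "xs \<in> (\<Union>T\<in>Fam. permutations_of_set T)" by blast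
    qed
  next
    show "(\<Union>T\<in>Fam. permutations_of_set T) \<subseteq> LL"
    proof
      fix xs assume "xs \<in> (\<Union>T\<in>Fam. permutations_of_set T)"
      then obtain T where T: "T \<in> Fam" "set xs = T" "distinct xs" by (auto simp: permutations_of_set_def)
      have "card T = t" using T(1) unfolding Fam_def by simp
      then have "length xs = t" using distinct_card[OF T(3)] T(2) by simp
      then show "xs \<in> LL" using T unfolding LL_def Fam_def by auto
    qed
  qed
  have cLL: "card LL = fact t * card Fam"
  proof -
    have "card LL = (\<Sum>T\<in>Fam. card (permutations_of_set T))"
      unfolding LLe
    proof (rule card_UN_disjoint[OF finFam])
      show "\<forall>T\<in>Fam. finite (permutations_of_set T)" by simp
      show "\<forall>T\<in>Fam. \<forall>T'\<in>Fam. T \<noteq> T' \<longrightarrow> permutations_of_set T \<inter> permutations_of_set T' = {}"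
        by (auto simp: permutations_of_set_def)
    qed
    also have "\<dots> = (\<Sum>T\<in>Fam. fact t)"
    proof (rule sum.cong)
      fix T assume T: "T \<in> Fam"
      then have "T \<subseteq> S1 \<or> T \<subseteq> S2" unfolding Fam_def by auto
      then have "finite T" using fin1 fin2 by (meson finite_subset)
      then show "card (permutations_of_set T) = fact t" using T unfolding Fam_def by simp
    qed simp
    finally show ?thesis by simp
  qed
  have "LL \<subseteq> U1 \<union> U2" unfolding LL_def U1_def U2_def by auto
  then have "card LL \<le> card (U1 \<union> U2)" by (intro card_mono) (use fU1 fU2 in auto)
  moreover have "card U1 + card U2 = card (U1 \<union> U2) + card (U1 \<inter> U2)" by (rule card_Un_Int[OF fU1 fU2])
  moreover have "card UD \<le> card (U1 \<inter> U2)"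
    by (rule card_mono) (use fU1 D in \<open>auto simp: U1_def U2_def UD_def\<close>)
  moreover have "card U1 = card S1 ^ t" unfolding U1_def by (rule card_lists_length_eq[OF fin1])
  moreover have "card U2 = card S2 ^ t" unfolding U2_def by (rule card_lists_length_eq[OF fin2])
  moreover have "card UD = card D ^ t" unfolding UD_def by (rule card_lists_length_eq[OF finD])
  ultimately show ?thesis using cLL unfolding Fam_def by linarith
qed

lemma forb_bound:
  assumes ps: "partial_system k t lam X \<B>" and kt: "t + 1 \<le> k"
    and S1: "S1 \<subseteq> X" and S2: "S2 \<subseteq> X" and Y: "Y \<inter> (S1 \<union> S2) = {}"
  shows "card {v\<in>Y. \<exists>B\<in>\<B>. v \<in> B \<and> (B - {v} \<subseteq> S1 \<or> B - {v} \<subseteq> S2)}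
          \<le> lam * card {T. card T = t \<and> (T \<subseteq> S1 \<or> T \<subseteq> S2)}"
proof -
  have finX: "finite X" and Bs: "\<And>B. B \<in> \<B> \<Longrightarrow> B \<subseteq> X \<and> card B = k"
    and lamb: "\<And>T. T \<subseteq> X \<Longrightarrow> card T = t \<Longrightarrow> card {B\<in>\<B>. T \<subseteq> B} \<le> lam"
    using ps unfolding partial_system_def by auto
  have finB: "finite \<B>"
    by (rule finite_subset[of _ "Pow X"]) (use Bs finX in auto)
  define Fam where "Fam = {T. card T = t \<and> (T \<subseteq> S1 \<or> T \<subseteq> S2)}"
  define W where "W = {v\<in>Y. \<exists>B\<in>\<B>. v \<in> B \<and> (B - {v} \<subseteq> S1 \<or> B - {v} \<subseteq> S2)}"
  define G where "G T = {v\<in>Y. \<exists>B\<in>\<B>. v \<in> B \<and> T \<subseteq> B \<and> (B - {v} \<subseteq> S1 \<or> B - {v} \<subseteq> S2)}" for T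
  have fS1: "finite S1" using S1 finX by (rule finite_subset)
  have fS2: "finite S2" using S2 finX by (rule finite_subset)
  have finFam: "finite Fam" unfolding Fam_def
    by (rule finite_subset[of _ "Pow S1 \<union> Pow S2"]) (use fS1 fS2 in auto)
  have WG: "W \<subseteq> (\<Union>T\<in>Fam. G T)"
  proof
    fix v assume "v \<in> W"
    then obtain B where v: "v \<in> Y" and B: "B \<in> \<B>" "v \<in> B" "B - {v} \<subseteq> S1 \<or> B - {v} \<subseteq> S2"
      unfolding W_def by auto
    have "finite B" using Bs[OF B(1)] finX by (meson finite_subset)
    then have "card (B - {v}) = k - 1" using Bs[OF B(1)] B(2) by (simp add: card_Diff_singleton)
    then have "t \<le> card (B - {v})" using kt by simp
    then obtain T where T: "T \<subseteq> B - {v}" "card T = t" by (metis obtain_subset_with_card_n)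
    have "T \<in> Fam" unfolding Fam_def using T B(3) by auto
    moreover have "v \<in> G T" unfolding G_def using v B T by auto
    ultimately show "v \<in> (\<Union>T\<in>Fam. G T)" by blast
  qed
  have cG: "card (G T) \<le> lam" if T: "T \<in> Fam" for T
  proof -
    have "\<forall>v\<in>G T. \<exists>B. B \<in> \<B> \<and> v \<in> B \<and> T \<subseteq> B \<and> (B - {v} \<subseteq> S1 \<or> B - {v} \<subseteq> S2)"
      unfolding G_def by auto
    from bchoice[OF this] obtain f where f0: "\<forall>v\<in>G T. f v \<in> \<B> \<and> v \<in> f v \<and> T \<subseteq> f v \<and> (f v - {v} \<subseteq> S1 \<or> f v - {v} \<subseteq> S2)"
      by blast
    have f: "f v \<in> \<B> \<and> v \<in> f v \<and> T \<subseteq> f v \<and> (f v - {v} \<subseteq> S1 \<or> f v - {v} \<subseteq> S2)" if "v \<in> G T" for v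
      using f0 that by blast
    have "inj_on f (G T)"
    proof (rule inj_onI)
      fix v w assume v: "v \<in> G T" and w: "w \<in> G T" and e: "f v = f w"
      have "w \<in> Y" using w unfolding G_def by auto
      then have "w \<notin> S1 \<union> S2" using Y by auto
      moreover have "w \<in> f v" using f[OF w] e by simp
      moreover have "f v - {v} \<subseteq> S1 \<union> S2" using f[OF v] by auto
      ultimately show "v = w" by auto
    qed
    moreover have "f ` G T \<subseteq> {B\<in>\<B>. T \<subseteq> B}" using f by auto
    ultimately have "card (G T) \<le> card {B\<in>\<B>. T \<subseteq> B}"
      by (rule card_inj_on_le) (use finB in auto)
    also have "\<dots> \<le> lam" using T S1 S2 lamb unfolding Fam_def by auto
    finally show ?thesis .
  qed
  have finU: "finite (\<Union>T\<in>Fam. G T)"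
  proof (rule finite_subset[OF _ finX])
    show "(\<Union>T\<in>Fam. G T) \<subseteq> X"
    proof
      fix v assume "v \<in> (\<Union>T\<in>Fam. G T)"
      then obtain T B where "B \<in> \<B>" "v \<in> B" unfolding G_def by blast
      then show "v \<in> X" using Bs by blast
    qed
  qed
  have "card W \<le> card (\<Union>T\<in>Fam. G T)" by (rule card_mono[OF finU WG])
  also have "\<dots> \<le> (\<Sum>T\<in>Fam. card (G T))" by (rule card_UN_le[OF finFam])
  also have "\<dots> \<le> (\<Sum>T\<in>Fam. lam)" by (rule sum_mono) (use cG in auto)
  also have "\<dots> = lam * card Fam" by simp
  finally show ?thesis unfolding W_def Fam_def .
qed

lemma window_in_pieces:
  assumes "\<forall>Q\<in>set Qs. l \<le> length Q" "1 \<le> l" "i + l \<le> length (concat Qs)"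
  shows "\<exists>c < length Qs. set (take l (drop i (concat Qs))) \<subseteq> set (Qs ! c)
      \<or> (Suc c < length Qs \<and> set (take l (drop i (concat Qs))) \<subseteq>
            set (drop (length (Qs ! c) - (l - 1)) (Qs ! c)) \<union> set (take (l - 1) (Qs ! Suc c)))"
  using assms
proof (induction Qs arbitrary: i)
  case Nil
  then show ?case by simp
next
  case (Cons Q R)
  have cc: "concat (Q # R) = Q @ concat R" by simp
  show ?case
  proof (cases "length Q \<le> i")
    case True
    have d: "drop i (concat (Q # R)) = drop (i - length Q) (concat R)" using True by simp
    have "\<exists>c < length R. set (take l (drop (i - length Q) (concat R))) \<subseteq> set (R ! c)
      \<or> (Suc c < length R \<and> set (take l (drop (i - length Q) (concat R))) \<subseteq>
            set (drop (length (R ! c) - (l - 1)) (R ! c)) \<union> set (take (l - 1) (R ! Suc c)))"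
      using Cons.prems True by (intro Cons.IH) auto
    then obtain c where "c < length R" "set (take l (drop (i - length Q) (concat R))) \<subseteq> set (R ! c)
      \<or> (Suc c < length R \<and> set (take l (drop (i - length Q) (concat R))) \<subseteq>
            set (drop (length (R ! c) - (l - 1)) (R ! c)) \<union> set (take (l - 1) (R ! Suc c)))" by blast
    then show ?thesis unfolding d by (intro exI[of _ "Suc c"]) auto
  next
    case False
    show ?thesis
    proof (cases "i + l \<le> length Q")
      case True
      have "take l (drop i (concat (Q # R))) = take l (drop i Q)" using True by simp
      then have "set (take l (drop i (concat (Q # R)))) \<subseteq> set Q"
        by (metis set_drop_subset set_take_subset order_trans)
      then show ?thesis by (intro exI[of _ 0]) auto
    next
      case False2: False
      have lQ: "l \<le> length Q" using Cons.prems by auto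
      have "R \<noteq> []" using Cons.prems(3) False2 by auto
      then obtain Q' R' where R: "R = Q' # R'" by (cases R) auto
      have lQ': "l \<le> length Q'" using Cons.prems R by auto
      have e: "take l (drop i (concat (Q # R))) = drop i Q @ take (l - (length Q - i)) (Q' @ concat R')"
        using False False2 R by simp
      have e2: "take (l - (length Q - i)) (Q' @ concat R') = take (l - (length Q - i)) Q'"
        using lQ' by simp
      have s1: "set (drop i Q) \<subseteq> set (drop (length Q - (l - 1)) Q)"
        by (rule set_drop_subset_set_drop) (use False2 in auto)
      have s2: "set (take (l - (length Q - i)) Q') \<subseteq> set (take (l - 1) Q')"
        by (rule set_take_subset_set_take) (use False in auto)
      have "set (take l (drop i (concat (Q # R)))) \<subseteq>
            set (drop (length Q - (l - 1)) Q) \<union> set (take (l - 1) Q')"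
        unfolding e e2 using s1 s2 by auto
      then show ?thesis using R by (intro exI[of _ 0]) auto
    qed
  qed
qed

lemma concat_map_upt_nth:
  assumes "c < M"
  shows "(map L [0..<M] @ map L [0..<M]) ! c = L c"
    and "(map L [0..<M] @ map L [0..<M]) ! (M + c) = L c"
  using assms by (auto simp: nth_append)

lemma pieces_nth_mod:
  assumes "c < 2 * M"
  shows "(map L [0..<M] @ map L [0..<M]) ! c = L (c mod M)"
proof (cases "c < M")
  case True
  then show ?thesis by (simp add: nth_append)
next
  case False
  then have "c - M < M" using assms by simp
  moreover have "c mod M = c - M" using False assms by (simp add: le_mod_geq)
  ultimately show ?thesis using False by (simp add: nth_append)
qed

lemma indep_mono: "independent_set \<B> Z \<Longrightarrow> Y \<subseteq> Z \<Longrightarrow> independent_set \<B> Y"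
  unfolding independent_set_def by blast

lemma good_from_lists:
  fixes L :: "nat \<Rightarrow> 'a list"
  assumes M: "1 \<le> M" and l1: "1 \<le> l"
    and len: "\<And>c. c < M \<Longrightarrow> l \<le> length (L c)"
    and xs: "xs = concat (map L [0..<M])"
    and ind1: "\<And>c. c < M \<Longrightarrow> independent_set \<B> (set (L c))"
    and ind2: "\<And>c. c < M \<Longrightarrow> independent_set \<B>
        (set (drop (length (L c) - (l - 1)) (L c)) \<union> set (take (l - 1) (L (Suc c mod M))))"
  shows "cyclically_good (length xs) \<B> (\<lambda>i. xs ! i) l"
  unfolding cyclically_good_def
proof (intro allI impI)
  fix S assume S: "card S = l \<and> cyc_consecutive (length xs) (\<lambda>i. xs ! i) S"
  let ?n = "length xs"
  obtain i where i: "i < ?n" and Se: "S = (\<lambda>j. xs ! ((i + j) mod ?n)) ` {0..<l}"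
    using S unfolding cyc_consecutive_def by auto
  have ln: "l \<le> ?n"
  proof -
    have "[0..<M] = 0 # [Suc 0..<M]" using M by (simp add: upt_conv_Cons)
    then have "length (L 0) \<le> ?n" unfolding xs by simp
    moreover have "l \<le> length (L 0)" using len M by auto
    ultimately show ?thesis by simp
  qed
  let ?Qs = "map L [0..<M] @ map L [0..<M]"
  have cQ: "concat ?Qs = xs @ xs" unfolding xs by simp
  have Sw: "S = set (take l (drop i (xs @ xs)))"
  proof -
    have "set (take l (drop i (xs @ xs))) = (\<lambda>j. (xs @ xs) ! (i + j)) ` {0..<l}"
    proof -
      have "length (drop i (xs @ xs)) \<ge> l" using i ln by simp
      then have "set (take l (drop i (xs @ xs))) = (\<lambda>j. drop i (xs @ xs) ! j) ` {0..<l}"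
        using nth_image[of l "drop i (xs @ xs)"] by simp
      also have "\<dots> = (\<lambda>j. (xs @ xs) ! (i + j)) ` {0..<l}"
      proof (rule image_cong)
        fix j assume "j \<in> {0..<l}"
        show "drop i (xs @ xs) ! j = (xs @ xs) ! (i + j)" using i by (intro nth_drop) simp
      qed simp
      finally show ?thesis .
    qed
    also have "\<dots> = (\<lambda>j. xs ! ((i + j) mod ?n)) ` {0..<l}"
    proof (rule image_cong)
      fix j assume j: "j \<in> {0..<l}"
      show "(xs @ xs) ! (i + j) = xs ! ((i + j) mod ?n)"
      proof (cases "i + j < ?n")
        case True
        then show ?thesis by (simp add: nth_append)
      next
        case False
        then have "(i + j) mod ?n = i + j - ?n" using i j ln by (simp add: le_mod_geq)
        then show ?thesis using False by (simp add: nth_append)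
      qed
    qed simp
    finally show ?thesis using Se by simp
  qed
  have lenQ: "\<forall>Q\<in>set ?Qs. l \<le> length Q" using len by auto
  have "i + l \<le> length (concat ?Qs)" unfolding cQ using i ln by simp
  then obtain c where c: "c < length ?Qs" and cc: "set (take l (drop i (concat ?Qs))) \<subseteq> set (?Qs ! c)
      \<or> (Suc c < length ?Qs \<and> set (take l (drop i (concat ?Qs))) \<subseteq>
            set (drop (length (?Qs ! c) - (l - 1)) (?Qs ! c)) \<union> set (take (l - 1) (?Qs ! Suc c)))"
    using window_in_pieces[OF lenQ l1] by blast
  have cM: "c < 2 * M" using c by simp
  have Qc: "?Qs ! c = L (c mod M)" by (rule pieces_nth_mod[OF cM])
  have cm: "c mod M < M" using M by simp
  show "independent_set \<B> S"
  proof (cases "set (take l (drop i (concat ?Qs))) \<subseteq> set (?Qs ! c)")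
    case True
    then have "S \<subseteq> set (L (c mod M))" unfolding cQ Qc Sw[symmetric] .
    then show ?thesis by (rule indep_mono[OF ind1[OF cm]])
  next
    case False
    then have sc: "Suc c < 2 * M" and sub: "set (take l (drop i (concat ?Qs))) \<subseteq>
            set (drop (length (?Qs ! c) - (l - 1)) (?Qs ! c)) \<union> set (take (l - 1) (?Qs ! Suc c))"
      using cc by auto
    have Qsc: "?Qs ! Suc c = L (Suc c mod M)" by (rule pieces_nth_mod[OF sc])
    have "Suc c mod M = Suc (c mod M) mod M" by (simp add: mod_Suc_eq)
    then have "S \<subseteq> set (drop (length (L (c mod M)) - (l - 1)) (L (c mod M))) \<union> set (take (l - 1) (L (Suc (c mod M) mod M)))"
      using sub \<open>Suc c mod M = Suc (c mod M) mod M\<close> unfolding cQ Qc Qsc Sw[symmetric] by simp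
    then show ?thesis by (rule indep_mono[OF ind2[OF cm]])
  qed
qed

lemma take_filter_keep:
  "\<forall>x\<in>set (take m ys). P x \<Longrightarrow> take m (filter P ys) = take m ys"
proof (induction ys arbitrary: m)
  case Nil
  then show ?case by simp
next
  case (Cons y ys)
  show ?case
  proof (cases m)
    case 0
    then show ?thesis by simp
  next
    case (Suc m')
    then have "P y" "\<forall>x\<in>set (take m' ys). P x" using Cons.prems by auto
    then show ?thesis using Cons.IH Suc by simp
  qed
qed

lemma set_drop_as_take_rev: "set (drop (length zs - m) zs) = set (take m (rev zs))"
  by (simp add: take_rev)

lemma drop_filter_keep:
  assumes "\<forall>x\<in>set (drop (length ys - m) ys). P x"
  shows "set (drop (length (filter P ys) - m) (filter P ys)) = set (drop (length ys - m) ys)"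
proof -
  have h: "\<forall>x\<in>set (take m (rev ys)). P x" using assms set_drop_as_take_rev[of ys m] by simp
  have "set (drop (length (filter P ys) - m) (filter P ys)) = set (take m (rev (filter P ys)))"
    by (rule set_drop_as_take_rev)
  also have "rev (filter P ys) = filter P (rev ys)" by (rule rev_filter)
  also have "take m (filter P (rev ys)) = take m (rev ys)" by (rule take_filter_keep[OF h])
  also have "set (take m (rev ys)) = set (drop (length ys - m) ys)" by (rule set_drop_as_take_rev[symmetric])
  finally show ?thesis .
qed

lemma card_hd_tl:
  assumes d: "distinct ys" and l: "l \<le> length ys" and l2: "2 \<le> l"
  shows "l \<le> card (set (take (l - 1) ys) \<union> set (drop (length ys - (l - 1)) ys))"
proof (cases "length ys \<le> 2 * (l - 1)")
  case True
  have "set (drop (l - 1) ys) \<subseteq> set (drop (length ys - (l - 1)) ys)"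
    by (rule set_drop_subset_set_drop) (use True in simp)
  moreover have "set ys = set (take (l - 1) ys) \<union> set (drop (l - 1) ys)"
    by (metis append_take_drop_id set_append)
  ultimately have "set ys \<subseteq> set (take (l - 1) ys) \<union> set (drop (length ys - (l - 1)) ys)" by blast
  moreover have "card (set ys) = length ys" using d by (rule distinct_card)
  ultimately show ?thesis using l
    by (metis (no_types, lifting) List.finite_set card_mono finite_Un le_trans)
next
  case False
  have disj: "set (take (l - 1) ys) \<inter> set (drop (length ys - (l - 1)) ys) = {}"
    by (rule set_take_disj_set_drop_if_distinct[OF d]) (use False in simp)
  have c1: "card (set (take (l - 1) ys)) = l - 1"
    using distinct_card[OF distinct_take[OF d, of "l - 1"]] l by simp
  have c2: "card (set (drop (length ys - (l - 1)) ys)) = l - 1"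
    using distinct_card[OF distinct_drop[OF d, of "length ys - (l - 1)"]] l by simp
  have "card (set (take (l - 1) ys) \<union> set (drop (length ys - (l - 1)) ys)) = 2 * (l - 1)"
    using card_Un_disjoint[OF _ _ disj] c1 c2 by simp
  then show ?thesis using l2 by simp
qed

lemma distinct_concat_upt:
  assumes "\<And>c. c < M \<Longrightarrow> distinct (L c)"
    and "\<And>c c'. c < M \<Longrightarrow> c' < M \<Longrightarrow> c \<noteq> c' \<Longrightarrow> set (L c) \<inter> set (L c') = {}"
  shows "distinct (concat (map L [0..<M]))"
  using assms
proof (induction M)
  case 0
  then show ?case by simp
next
  case (Suc M)
  have "distinct (concat (map L [0..<M]))" using Suc by auto
  moreover have "distinct (L M)" using Suc by auto
  moreover have "set (concat (map L [0..<M])) \<inter> set (L M) = {}"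
  proof (rule ccontr)
    assume "set (concat (map L [0..<M])) \<inter> set (L M) \<noteq> {}"
    then obtain x a where "a < M" "x \<in> set (L a)" "x \<in> set (L M)" by auto
    moreover have "set (L a) \<inter> set (L M) = {}" using Suc.prems(2)[of a M] \<open>a < M\<close> by simp
    ultimately show False by blast
  qed
  ultimately show ?case by simp
qed

lemma pred_mod:
  assumes "c < M" "Suc c mod M = c0"
  shows "c = (c0 + M - 1) mod M"
proof (cases "Suc c < M")
  case True
  then have "c0 = Suc c" using assms by simp
  then show ?thesis using True by simp
next
  case False
  then have "Suc c = M" using assms by simp
  then have "c0 = 0" using assms by simp
  then show ?thesis using \<open>Suc c = M\<close> by simp
qed

lemma indep_of_no_block: "(\<And>B. B \<in> \<B> \<Longrightarrow> \<not> B \<subseteq> Y) \<Longrightarrow> independent_set \<B> Y"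
  unfolding independent_set_def by blast

lemma filling:
  fixes X :: "'a set" and col :: "'a \<Rightarrow> nat"
  assumes ps: "partial_system k t lam X \<B>" and kt: "t + 1 \<le> k" and t1: "1 \<le> t"
    and l2: "2 \<le> l" and M2: "2 \<le> M"
    and colX: "\<And>v. v \<in> X \<Longrightarrow> col v < M"
    and lll: "\<And>B c. B \<in> \<B> \<Longrightarrow> c < M \<Longrightarrow> \<not> B \<subseteq> {v\<in>X. col v = c \<or> col v = Suc c mod M}"
    and num: "real lam * (2 ^ (t + 1) - 1) * real l ^ t / fact t + real (M * (2 * l - 2)) < real (card X)"
  shows "\<exists>xs. distinct xs \<and> set xs = X \<and> cyclically_good (length xs) \<B> (\<lambda>i. xs ! i) l"
proof -
  have finX: "finite X" and Bs: "\<And>B. B \<in> \<B> \<Longrightarrow> B \<subseteq> X \<and> card B = k"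
    using ps unfolding partial_system_def by auto
  define C where "C c = {v\<in>X. col v = c}" for c
  have finC: "finite (C c)" for c unfolding C_def using finX by auto
  define big where "big c \<longleftrightarrow> l \<le> card (C c)" for c
  define ys where "ys c = (SOME zs. distinct zs \<and> set zs = C c)" for c
  have ys: "distinct (ys c) \<and> set (ys c) = C c" for c
    unfolding ys_def by (rule someI_ex) (use finite_distinct_list[OF finC] in blast)
  have lys: "length (ys c) = card (C c)" for c using ys[of c] distinct_card by metis
  define Hd where "Hd c = set (take (l - 1) (ys c))" for c
  define Tl where "Tl c = set (drop (card (C c) - (l - 1)) (ys c))" for c
  have HdC: "Hd c \<subseteq> C c" for c unfolding Hd_def using ys[of c] set_take_subset by metis
  have TlC: "Tl c \<subseteq> C c" for c unfolding Tl_def using ys[of c] set_drop_subset by metis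
  have cHd: "card (Hd c) \<le> l - 1" for c
    unfolding Hd_def by (metis card_length length_take min.bounded_iff order.trans nle_le)
  have cTl: "card (Tl c) \<le> l - 1" if "big c" for c
  proof -
    have "card (Tl c) \<le> length (drop (card (C c) - (l - 1)) (ys c))" unfolding Tl_def by (rule card_length)
    also have "\<dots> = l - 1" using that lys[of c] unfolding big_def by simp
    finally show ?thesis .
  qed
  define Pool0 where "Pool0 = {v\<in>X. big (col v) \<and> v \<notin> Hd (col v) \<union> Tl (col v)}"
  define Fin where "Fin A c = C c \<union> A c" for A :: "nat \<Rightarrow> 'a set" and c
  define TT where "TT A c = (if big c then Tl c else Fin A c)" for A :: "nat \<Rightarrow> 'a set" and c
  define HH where "HH A c = (if big c then Hd c else Fin A c)" for A :: "nat \<Rightarrow> 'a set" and c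
  define UA where "UA A = (\<Union>c<M. A c)" for A :: "nat \<Rightarrow> 'a set"
  define Good where "Good A \<longleftrightarrow> (\<forall>c. A c \<subseteq> Pool0) \<and> (\<forall>c. big c \<longrightarrow> A c = {}) \<and>
      (\<forall>c c'. c \<noteq> c' \<longrightarrow> A c \<inter> A c' = {}) \<and> (\<forall>c<M. \<not> big c \<longrightarrow> card (Fin A c) \<le> l) \<and>
      (\<forall>c<M. independent_set \<B> (TT A c \<union> HH A (Suc c mod M))) \<and> (\<forall>c. M \<le> c \<longrightarrow> A c = {})"
    for A :: "nat \<Rightarrow> 'a set"
  have Pool0X: "Pool0 \<subseteq> X" unfolding Pool0_def by auto
  have CX: "C c \<subseteq> X" for c unfolding C_def by auto
  have finPool: "finite Pool0" using Pool0X finX finite_subset by blast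
  have avoid: "v \<notin> TT A c \<and> v \<notin> HH A c \<and> (\<not> big c \<longrightarrow> v \<notin> Fin A c)"
    if G: "Good A" and v: "v \<in> Pool0 - UA A" for A v c
  proof -
    have vA: "v \<notin> A c"
    proof (cases "c < M")
      case True
      then show ?thesis using v unfolding UA_def by auto
    next
      case False
      then show ?thesis using G unfolding Good_def by auto
    qed
    have vb: "big (col v)" "v \<notin> Hd (col v) \<union> Tl (col v)" using v unfolding Pool0_def by auto
    have vC: "\<not> big c \<Longrightarrow> v \<notin> C c" using vb unfolding C_def by auto
    have vHT: "v \<notin> Hd c \<and> v \<notin> Tl c"
    proof (cases "col v = c")
      case True
      then show ?thesis using vb by auto
    next
      case False
      then show ?thesis using HdC[of c] TlC[of c] unfolding C_def by auto
    qed
    show ?thesis unfolding TT_def HH_def Fin_def using vA vC vHT by auto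
  qed
  have step: "\<exists>v. v \<in> X \<and> v \<notin> UA A \<and> Good (A(c0 := insert v (A c0)))"
    if G: "Good A" and c0: "c0 < M" "\<not> big c0" and def: "card (Fin A c0) < l" for A c0
  proof -
    define Pc where "Pc = Pool0 - UA A"
    define P where "P = TT A ((c0 + M - 1) mod M)"
    define D where "D = Fin A c0"
    define Q where "Q = HH A (Suc c0 mod M)"
    have AX: "A c \<subseteq> X" for c using G Pool0X unfolding Good_def by blast
    have FinX: "Fin A c \<subseteq> X" for c unfolding Fin_def using CX AX by auto
    have TTX: "TT A c \<subseteq> X" for c unfolding TT_def using TlC CX FinX by (auto dest: subsetD)
    have HHX: "HH A c \<subseteq> X" for c unfolding HH_def using HdC CX FinX by (auto dest: subsetD)
    have S1X: "P \<union> D \<subseteq> X" unfolding P_def D_def using TTX FinX by auto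
    have S2X: "D \<union> Q \<subseteq> X" unfolding Q_def D_def using HHX FinX by auto
    have Pcdisj: "Pc \<inter> ((P \<union> D) \<union> (D \<union> Q)) = {}"
      unfolding Pc_def P_def D_def Q_def using avoid[OF G] c0(2) by blast
    define W where "W = {v\<in>Pc. \<exists>B\<in>\<B>. v \<in> B \<and> (B - {v} \<subseteq> P \<union> D \<or> B - {v} \<subseteq> D \<union> Q)}"
    define Fam where "Fam = {T. card T = t \<and> (T \<subseteq> P \<union> D \<or> T \<subseteq> D \<union> Q)}"
    have cW: "card W \<le> lam * card Fam"
      unfolding W_def Fam_def by (rule forb_bound[OF ps kt S1X S2X Pcdisj])
    have finP: "finite P" and finD: "finite D" and finQ: "finite Q"
      using S1X S2X finX finite_subset by (meson le_sup_iff)+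
    have cF: "fact t * card Fam + card D ^ t \<le> card (P \<union> D) ^ t + card (D \<union> Q) ^ t"
      unfolding Fam_def by (rule card_fam_lists) (use finP finD finQ in auto)
    have cardTT: "card (TT A c) \<le> l" if "c < M" for c
    proof (cases "big c")
      case True
      then show ?thesis unfolding TT_def using cTl[of c] by simp
    next
      case False
      then show ?thesis unfolding TT_def using G that unfolding Good_def by auto
    qed
    have cardHH: "card (HH A c) \<le> l" if "c < M" for c
    proof (cases "big c")
      case True
      then show ?thesis unfolding HH_def using cHd[of c] by simp
    next
      case False
      then show ?thesis unfolding HH_def using G that unfolding Good_def by auto
    qed
    have cP: "card P \<le> l" unfolding P_def by (rule cardTT) (use M2 in simp)
    have cQ: "card Q \<le> l" unfolding Q_def by (rule cardHH) (use M2 in simp)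
    have cD: "card D \<le> l" using def unfolding D_def by simp
    have cS1: "card (P \<union> D) \<le> card P + card D" by (rule card_Un_le)
    have cS2: "card (D \<union> Q) \<le> card D + card Q" by (rule card_Un_le)
    have rF: "fact t * real (card Fam) \<le> (2 ^ (t + 1) - 1) * real l ^ t"
    proof -
      have "real (fact t * card Fam + card D ^ t) \<le> real (card (P \<union> D) ^ t + card (D \<union> Q) ^ t)"
        using cF by (simp only: of_nat_le_iff)
      then have a: "fact t * real (card Fam) + real (card D) ^ t \<le> real (card (P \<union> D)) ^ t + real (card (D \<union> Q)) ^ t"
        by simp
      have b: "real (card (P \<union> D)) ^ t \<le> (real (card P) + real (card D)) ^ t"
        using cS1 by (intro power_mono) auto
      have c: "real (card (D \<union> Q)) ^ t \<le> (real (card Q) + real (card D)) ^ t"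
        using cS2 by (intro power_mono) auto
      have d: "(real (card P) + real (card D)) ^ t + (real (card Q) + real (card D)) ^ t - real (card D) ^ t
          \<le> (2 ^ (t + 1) - 1) * real l ^ t"
        by (rule three_pow_bound) (use cP cQ cD in auto)
      show ?thesis using a b c d by linarith
    qed
    have rW: "real (card W) \<le> real lam * (2 ^ (t + 1) - 1) * real l ^ t / fact t"
    proof -
      have "real (card W) \<le> real lam * real (card Fam)" using cW by (metis of_nat_le_iff of_nat_mult)
      also have "real (card Fam) \<le> (2 ^ (t + 1) - 1) * real l ^ t / fact t"
        using rF by (simp add: field_simps mult.commute)
      then have "real lam * real (card Fam) \<le> real lam * ((2 ^ (t + 1) - 1) * real l ^ t / fact t)"
        by (intro mult_left_mono) auto
      finally show ?thesis by simp
    qed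
    define R where "R c = (if big c then Hd c \<union> Tl c else Fin A c)" for c
    have XR: "X \<subseteq> Pc \<union> (\<Union>c<M. R c)"
    proof
      fix v assume v: "v \<in> X"
      have cv: "col v < M" using colX[OF v] .
      show "v \<in> Pc \<union> (\<Union>c<M. R c)"
      proof (cases "big (col v)")
        case False
        then have "v \<in> R (col v)" unfolding R_def Fin_def C_def using v by auto
        then show ?thesis using cv by auto
      next
        case True
        show ?thesis
        proof (cases "v \<in> Hd (col v) \<union> Tl (col v)")
          case True2: True
          then have "v \<in> R (col v)" unfolding R_def using True by auto
          then show ?thesis using cv by auto
        next
          case False
          then have vP: "v \<in> Pool0" unfolding Pool0_def using v True by auto
          show ?thesis
          proof (cases "v \<in> UA A")
            case True3: True
            then obtain c where c: "c < M" "v \<in> A c" unfolding UA_def by auto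
            then have "\<not> big c" using G unfolding Good_def by auto
            then have "v \<in> R c" unfolding R_def Fin_def using c by auto
            then show ?thesis using c by auto
          next
            case False
            then show ?thesis unfolding Pc_def using vP by auto
          qed
        qed
      qed
    qed
    have cR: "card (R c) \<le> 2 * l - 2" if "c < M" for c
    proof (cases "big c")
      case True
      have "card (Hd c \<union> Tl c) \<le> card (Hd c) + card (Tl c)" by (rule card_Un_le)
      then show ?thesis unfolding R_def using True cHd[of c] cTl[OF True] by simp
    next
      case False
      then show ?thesis unfolding R_def using G that l2 unfolding Good_def by auto
    qed
    have finPc: "finite Pc" unfolding Pc_def using finPool by auto
    have RX: "R c \<subseteq> X" for c unfolding R_def using HdC[of c] TlC[of c] CX[of c] FinX[of c] by auto
    have finR: "finite (\<Union>c<M. R c)" by (rule finite_subset[OF _ finX]) (use RX in blast)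
    have "card X \<le> card (Pc \<union> (\<Union>c<M. R c))" by (rule card_mono) (use finPc finR XR in auto)
    also have "\<dots> \<le> card Pc + card (\<Union>c<M. R c)" by (rule card_Un_le)
    also have "card (\<Union>c<M. R c) \<le> (\<Sum>c<M. card (R c))" by (rule card_UN_le) simp
    also have "\<dots> \<le> (\<Sum>c<M. 2 * l - 2)" by (rule sum_mono) (use cR in auto)
    also have "\<dots> = M * (2 * l - 2)" by simp
    finally have cX: "card X \<le> card Pc + M * (2 * l - 2)" by simp
    have "real (card W) < real (card Pc)"
    proof -
      have "real (card X) \<le> real (card Pc) + real (M * (2 * l - 2))"
        using cX by (metis of_nat_add of_nat_le_iff)
      then show ?thesis using rW num by linarith
    qed
    then have "card W < card Pc" by simp
    moreover have "W \<subseteq> Pc" unfolding W_def by auto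
    ultimately have "\<not> Pc \<subseteq> W" by (metis subset_antisym less_irrefl)
    then obtain v where vPc: "v \<in> Pc" and vW: "v \<notin> W" by auto
    have vX: "v \<in> X" using vPc Pool0X unfolding Pc_def by auto
    have vU: "v \<notin> UA A" using vPc unfolding Pc_def by auto
    define A' where "A' = A(c0 := insert v (A c0))"
    have same: "TT A' c = TT A c \<and> HH A' c = HH A c \<and> Fin A' c = Fin A c" if "c \<noteq> c0" for c
      unfolding A'_def TT_def HH_def Fin_def using that by auto
    have Fin0: "Fin A' c0 = insert v D" unfolding A'_def Fin_def D_def by auto
    have TT0: "TT A' c0 = insert v D" "HH A' c0 = insert v D" "TT A c0 = D" "HH A c0 = D"
      unfolding TT_def HH_def using c0 Fin0 unfolding D_def by auto
    have sc0: "Suc c0 mod M \<noteq> c0" using c0(1) M2 by (cases "Suc c0 = M") auto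
    have oldind: "independent_set \<B> (TT A c \<union> HH A (Suc c mod M))" if "c < M" for c
      using G that unfolding Good_def by auto
    have "Good A'"
      unfolding Good_def
    proof (intro conjI allI impI)
      fix c show "A' c \<subseteq> Pool0" using G vPc unfolding A'_def Good_def Pc_def by auto
    next
      fix c assume "big c" then show "A' c = {}" using G c0 unfolding A'_def Good_def by auto
    next
      fix c c' :: nat assume cc: "c \<noteq> c'"
      have vA: "v \<notin> A c" for c
      proof (cases "c < M")
        case True then show ?thesis using vU unfolding UA_def by auto
      next
        case False then show ?thesis using G unfolding Good_def by auto
      qed
      show "A' c \<inter> A' c' = {}" using G cc vA unfolding A'_def Good_def by auto
    next
      fix c assume "c < M" "\<not> big c"
      show "card (Fin A' c) \<le> l"
      proof (cases "c = c0")
        case True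
        have "card (insert v D) \<le> Suc (card D)" by (simp add: card_insert_le_m1 card_insert_if finD)
        then show ?thesis using True Fin0 def unfolding D_def by simp
      next
        case False
        then show ?thesis using same[OF False] G \<open>c < M\<close> \<open>\<not> big c\<close> unfolding Good_def by auto
      qed
    next
      fix c assume cM: "c < M"
      show "independent_set \<B> (TT A' c \<union> HH A' (Suc c mod M))"
      proof (cases "c = c0")
        case True
        have e: "TT A' c \<union> HH A' (Suc c mod M) = insert v (D \<union> Q)"
          using True TT0 same[OF sc0] unfolding Q_def by auto
        show ?thesis unfolding e
        proof (rule indep_of_no_block)
          fix B assume B: "B \<in> \<B>"
          show "\<not> B \<subseteq> insert v (D \<union> Q)"
          proof
            assume sub: "B \<subseteq> insert v (D \<union> Q)"
            show False
            proof (cases "v \<in> B")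
              case True
              then have "B - {v} \<subseteq> D \<union> Q" using sub by auto
              then have "v \<in> W" unfolding W_def using vPc B True by auto
              then show False using vW by simp
            next
              case False
              then have "B \<subseteq> TT A c0 \<union> HH A (Suc c0 mod M)" using sub TT0 unfolding Q_def by auto
              then show False using oldind[OF c0(1)] B unfolding independent_set_def by auto
            qed
          qed
        qed
      next
        case False
        show ?thesis
        proof (cases "Suc c mod M = c0")
          case True
          have cp: "c = (c0 + M - 1) mod M" by (rule pred_mod[OF cM True])
          have e: "TT A' c \<union> HH A' (Suc c mod M) = insert v (P \<union> D)"
            using True TT0 same[OF False] cp unfolding P_def by auto
          show ?thesis unfolding e
          proof (rule indep_of_no_block)
            fix B assume B: "B \<in> \<B>"
            show "\<not> B \<subseteq> insert v (P \<union> D)"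
            proof
              assume sub: "B \<subseteq> insert v (P \<union> D)"
              show False
              proof (cases "v \<in> B")
                case True
                then have "B - {v} \<subseteq> P \<union> D" using sub by auto
                then have "v \<in> W" unfolding W_def using vPc B True by auto
                then show False using vW by simp
              next
                case False2: False
                have "TT A c \<union> HH A (Suc c mod M) = P \<union> D" using True TT0 cp unfolding P_def by auto
                then have "B \<subseteq> TT A c \<union> HH A (Suc c mod M)" using sub False2 by auto
                then show False using oldind[OF cM] B unfolding independent_set_def by auto
              qed
            qed
          qed
        next
          case False2: False
          have "TT A' c \<union> HH A' (Suc c mod M) = TT A c \<union> HH A (Suc c mod M)"
            using same[OF False] same[OF False2] by auto
          then show ?thesis using oldind[OF cM] by simp
        qed
      qed
    next
      fix c :: nat assume "M \<le> c"
      then show "A' c = {}" using G c0 unfolding A'_def Good_def by auto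
    qed
    then show ?thesis using vX vU unfolding A'_def by blast
  qed

  have G0: "Good (\<lambda>_. {})"
    unfolding Good_def
  proof (intro conjI allI impI)
    fix c assume cM: "c < M"
    have "TT (\<lambda>_. {}) c \<union> HH (\<lambda>_. {}) (Suc c mod M) \<subseteq> {v\<in>X. col v = c \<or> col v = Suc c mod M}"
      unfolding TT_def HH_def Fin_def using TlC[of c] HdC[of "Suc c mod M"] unfolding C_def by auto
    then show "independent_set \<B> (TT (\<lambda>_. {}) c \<union> HH (\<lambda>_. {}) (Suc c mod M))"
      using lll[OF _ cM] unfolding independent_set_def by blast
  next
    fix c assume "c < M" "\<not> big c"
    then show "card (Fin (\<lambda>_. {}) c) \<le> l" unfolding Fin_def big_def by simp
  qed auto
  have UAX: "UA A \<subseteq> X" if "Good A" for A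
    using that Pool0X unfolding Good_def UA_def by blast
  have iter: "\<And>A. Good A \<Longrightarrow> card X - card (UA A) = m \<Longrightarrow>
      \<exists>A'. Good A' \<and> (\<forall>c<M. \<not> big c \<longrightarrow> card (Fin A' c) = l)" for m
  proof (induction m rule: less_induct)
    case (less m)
    fix A assume G: "Good A" and m: "card X - card (UA A) = m"
    show "\<exists>A'. Good A' \<and> (\<forall>c<M. \<not> big c \<longrightarrow> card (Fin A' c) = l)"
    proof (cases "\<forall>c<M. \<not> big c \<longrightarrow> card (Fin A c) = l")
      case True
      then show ?thesis using G by blast
    next
      case False
      then obtain c0 where c0: "c0 < M" "\<not> big c0" "card (Fin A c0) \<noteq> l" by blast
      then have "card (Fin A c0) < l" using G unfolding Good_def by fastforce
      then obtain v where v: "v \<in> X" "v \<notin> UA A" and G': "Good (A(c0 := insert v (A c0)))"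
        using step[OF G c0(1,2)] by blast
      have eU: "UA (A(c0 := insert v (A c0))) = insert v (UA A)" unfolding UA_def using c0(1) by auto
      have finU: "finite (UA A)" using UAX[OF G] finX finite_subset by blast
      have cU: "card (UA (A(c0 := insert v (A c0)))) = Suc (card (UA A))" unfolding eU using v finU by simp
      have "card (insert v (UA A)) \<le> card X" by (rule card_mono[OF finX]) (use v UAX[OF G] in auto)
      then have "card X - card (UA (A(c0 := insert v (A c0)))) < m" using m cU eU by simp
      then show ?thesis using less.IH G' by blast
    qed
  qed
  obtain A where G: "Good A" and full: "\<And>c. c < M \<Longrightarrow> \<not> big c \<Longrightarrow> card (Fin A c) = l"
    using iter[OF G0 refl] by blast
  define U where "U = UA A"
  have UPool: "U \<subseteq> Pool0" using G unfolding U_def UA_def Good_def by blast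
  have AU: "c < M \<Longrightarrow> A c \<subseteq> U" for c unfolding U_def UA_def by auto
  have Aempty: "big c \<Longrightarrow> A c = {}" for c using G unfolding Good_def by auto
  have AP: "A c \<subseteq> Pool0" for c using G unfolding Good_def by auto
  have Adisj: "c \<noteq> c' \<Longrightarrow> A c \<inter> A c' = {}" for c c' using G unfolding Good_def by auto
  have FinX: "Fin A c \<subseteq> X" for c unfolding Fin_def using CX AP Pool0X by blast
  define Lf where "Lf c = (SOME zs. distinct zs \<and> set zs = Fin A c)" for c
  have Lf: "distinct (Lf c) \<and> set (Lf c) = Fin A c" for c
    unfolding Lf_def by (rule someI_ex) (use finite_distinct_list[OF finite_subset[OF FinX finX]] in blast)
  define L where "L c = (if big c then filter (\<lambda>v. v \<notin> U) (ys c) else Lf c)" for c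
  have Ld: "distinct (L c)" for c unfolding L_def using ys Lf by auto
  have Ls: "set (L c) = (if big c then C c - U else Fin A c)" for c unfolding L_def using ys Lf by auto
  have HTU: "(Hd c \<union> Tl c) \<inter> U = {}" for c
  proof -
    have "v \<notin> U" if "v \<in> Hd c \<union> Tl c" for v
    proof
      assume "v \<in> U"
      then have "v \<in> Pool0" using UPool by auto
      moreover have "col v = c" using that HdC TlC unfolding C_def by blast
      ultimately show False using that unfolding Pool0_def by auto
    qed
    then show ?thesis by blast
  qed
  define xs where "xs = concat (map L [0..<M])"
  have colC: "v \<in> C c \<Longrightarrow> v \<in> C c' \<Longrightarrow> c = c'" for v c c' unfolding C_def by auto
  have PoolC: "v \<in> Pool0 \<Longrightarrow> v \<in> C c \<Longrightarrow> big c" for v c unfolding Pool0_def C_def by auto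
  have disjL: "set (L c) \<inter> set (L c') = {}" if "c < M" "c' < M" "c \<noteq> c'" for c c'
  proof -
    have "v \<notin> set (L c')" if v: "v \<in> set (L c)" for v
    proof
      assume v': "v \<in> set (L c')"
      have memb: "(v \<in> C d \<and> v \<notin> U) \<or> (\<not> big d \<and> (v \<in> C d \<or> v \<in> A d))" if "v \<in> set (L d)" for d
        using that unfolding Ls Fin_def by (auto split: if_splits)
      show False
      proof (cases "v \<in> U")
        case True
        have "v \<in> A c" "v \<in> A c'"
          using memb[OF v] memb[OF v'] True UPool PoolC by blast+
        then show False using Adisj[OF \<open>c \<noteq> c'\<close>] by blast
      next
        case False
        then have "v \<in> C c" "v \<in> C c'"
          using memb[OF v] memb[OF v'] AU \<open>c < M\<close> \<open>c' < M\<close> by blast+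
        then show False using colC \<open>c \<noteq> c'\<close> by blast
      qed
    qed
    then show ?thesis by blast
  qed
  have dxs: "distinct xs" unfolding xs_def by (rule distinct_concat_upt) (use Ld disjL in auto)
  have sxs: "set xs = X"
  proof
    have "set (L c) \<subseteq> X" for c unfolding Ls using CX[of c] FinX[of c] by auto
    then show "set xs \<subseteq> X" unfolding xs_def by auto
  next
    show "X \<subseteq> set xs"
    proof
      fix v assume v: "v \<in> X"
      have cv: "col v < M" using colX[OF v] .
      have "\<exists>c<M. v \<in> set (L c)"
      proof (cases "big (col v)")
        case False
        then have "v \<in> set (L (col v))" unfolding Ls Fin_def C_def using v by auto
        then show ?thesis using cv by blast
      next
        case True
        show ?thesis
        proof (cases "v \<in> U")
          case False
          then have "v \<in> set (L (col v))" unfolding Ls C_def using v True by auto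
          then show ?thesis using cv by blast
        next
          case True2: True
          then obtain c where c: "c < M" "v \<in> A c" unfolding U_def UA_def by auto
          then have "\<not> big c" using Aempty by auto
          then have "v \<in> set (L c)" unfolding Ls Fin_def using c by auto
          then show ?thesis using c by blast
        qed
      qed
      then show "v \<in> set xs" unfolding xs_def by auto
    qed
  qed
  have lenL: "l \<le> length (L c)" if "c < M" for c
  proof (cases "big c")
    case True
    have "l \<le> card (Hd c \<union> Tl c)"
      unfolding Hd_def Tl_def using card_hd_tl[of "ys c" l] ys[of c] lys[of c] True l2 unfolding big_def by simp
    also have "\<dots> \<le> card (set (L c))"
    proof (rule card_mono)
      show "finite (set (L c))" by simp
      have "Hd c \<union> Tl c \<subseteq> C c - U" using HdC[of c] TlC[of c] HTU[of c] by blast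
      then show "Hd c \<union> Tl c \<subseteq> set (L c)" using True by (simp add: Ls)
    qed
    also have "\<dots> = length (L c)" by (rule distinct_card[OF Ld])
    finally show ?thesis .
  next
    case False
    have "length (L c) = card (set (L c))" using distinct_card[OF Ld] by simp
    also have "\<dots> = l" using full[OF that False] False by (simp add: Ls)
    finally show ?thesis by simp
  qed
  have tailL: "set (drop (length (L c) - (l - 1)) (L c)) \<subseteq> TT A c" for c
  proof (cases "big c")
    case True
    have keep: "\<forall>x\<in>set (drop (length (ys c) - (l - 1)) (ys c)). x \<notin> U"
      using HTU[of c] lys[of c] unfolding Tl_def by auto
    have "set (drop (length (L c) - (l - 1)) (L c)) = set (drop (length (ys c) - (l - 1)) (ys c))"
      unfolding L_def using True drop_filter_keep[OF keep] by simp
    then show ?thesis unfolding TT_def Tl_def using True lys[of c] by simp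
  next
    case False
    have "set (drop (length (L c) - (l - 1)) (L c)) \<subseteq> set (L c)" by (rule set_drop_subset)
    then show ?thesis unfolding TT_def using False by (simp add: Ls)
  qed
  have headL: "set (take (l - 1) (L c)) \<subseteq> HH A c" for c
  proof (cases "big c")
    case True
    have keep: "\<forall>x\<in>set (take (l - 1) (ys c)). x \<notin> U" using HTU[of c] unfolding Hd_def by auto
    have "take (l - 1) (L c) = take (l - 1) (ys c)"
      unfolding L_def using True take_filter_keep[OF keep] by simp
    then show ?thesis unfolding HH_def Hd_def using True by simp
  next
    case False
    have "set (take (l - 1) (L c)) \<subseteq> set (L c)" by (rule set_take_subset)
    then show ?thesis unfolding HH_def using False by (simp add: Ls)
  qed
  have ind2: "independent_set \<B> (set (drop (length (L c) - (l - 1)) (L c)) \<union> set (take (l - 1) (L (Suc c mod M))))"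
    if "c < M" for c
  proof -
    have "independent_set \<B> (TT A c \<union> HH A (Suc c mod M))" using G that unfolding Good_def by auto
    then show ?thesis by (rule indep_mono) (use tailL headL in blast)
  qed
  have ind1: "independent_set \<B> (set (L c))" if cM: "c < M" for c
  proof (cases "big c")
    case True
    have "set (L c) \<subseteq> {v\<in>X. col v = c \<or> col v = Suc c mod M}" using True unfolding Ls C_def by auto
    moreover have "independent_set \<B> {v\<in>X. col v = c \<or> col v = Suc c mod M}"
      using lll[OF _ cM] unfolding independent_set_def by blast
    ultimately show ?thesis using indep_mono by blast
  next
    case False
    have "independent_set \<B> (TT A c \<union> HH A (Suc c mod M))" using G cM unfolding Good_def by auto
    moreover have "set (L c) \<subseteq> TT A c \<union> HH A (Suc c mod M)" using False unfolding TT_def by (simp add: Ls)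
    ultimately show ?thesis using indep_mono by blast
  qed
  have cg: "cyclically_good (length xs) \<B> (\<lambda>i. xs ! i) l"
    by (rule good_from_lists[where L = L and M = M]) (use M2 l2 lenL ind1 ind2 xs_def in auto)
  show ?thesis using dxs sxs cg by blast
qed

lemma fact_le_pow: "(fact (Suc m) :: nat) \<le> (m + 2) ^ m"
proof (induction m)
  case 0
  then show ?case by simp
next
  case (Suc m)
  have "fact (Suc (Suc m)) = (m + 2) * fact (Suc m)" by simp
  also have "\<dots> \<le> (m + 2) * (m + 2) ^ m" using Suc.IH by (rule mult_le_mono2)
  also have "\<dots> = (m + 2) ^ Suc m" by simp
  also have "\<dots> \<le> (Suc m + 2) ^ Suc m" by (rule power_mono) auto
  finally show ?case .
qed

lemma aux_div: "(x::real) ^ (s + 1) / F = (x / F) * x ^ s"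
  by (simp add: power_add field_simps)

lemma aux_ring: "(a::real) ^ (s + 1) * (2 ^ (s + 1) * b ^ (s + 2) * y) = (2 * b * a) ^ (s + 1) * (b * y)"
proof -
  have e1: "b ^ (s + 2) = b ^ (s + 1) * b" by simp
  have e2: "(2 * b * a) ^ (s + 1) = 2 ^ (s + 1) * b ^ (s + 1) * a ^ (s + 1)" by (simp only: power_mult_distrib)
  show ?thesis unfolding e1 e2 by (simp only: ac_simps)
qed

lemma NL_aux:
  fixes b beta alpha rho :: real and s :: nat
  assumes b: "(real s + 3) / fact (s + 2) \<le> b" and beta: "0 < beta" "beta ^ (s + 2) = b"
    and al: "0 < alpha" "2 * beta * alpha < 1"
    and rho: "(real s + 3) / alpha \<le> rho"
  shows "alpha * rho \<le> beta * rho ^ (s + 1)"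
proof -
  have "0 < (real s + 3) / alpha" using al by simp
  then have rho0: "0 < rho" using rho by linarith
  have f1: "1 \<le> (real s + 3) ^ (s + 1) / fact (s + 2)"
  proof -
    have e: "Suc (s + 1) = s + 2" "s + 1 + 2 = s + 3" by simp_all
    have n: "(fact (s + 2) :: nat) \<le> (s + 3) ^ (s + 1)" using fact_le_pow[of "s + 1"] unfolding e .
    have "real (fact (s + 2)) \<le> real ((s + 3) ^ (s + 1))" using n by (simp only: of_nat_le_iff)
    then have "(fact (s + 2) :: real) \<le> (real s + 3) ^ (s + 1)"
      by (simp only: of_nat_fact of_nat_power of_nat_add of_nat_numeral)
    moreover have "(0::real) < fact (s + 2)" by (rule fact_gt_zero)
    ultimately show ?thesis by (simp only: le_divide_eq_1_pos)
  qed
  have b0: "0 \<le> b"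
  proof -
    have "0 \<le> (real s + 3) / fact (s + 2)" by (intro divide_nonneg_nonneg) auto
    then show ?thesis using b by linarith
  qed
  have f2: "(real s + 3) ^ (s + 1) / fact (s + 2) \<le> b * (real s + 3) ^ s"
  proof -
    have "(real s + 3) ^ (s + 1) / fact (s + 2) = ((real s + 3) / fact (s + 2)) * (real s + 3) ^ s"
      by (rule aux_div)
    also have "\<dots> \<le> b * (real s + 3) ^ s" using b by (intro mult_right_mono) auto
    finally show ?thesis .
  qed
  have f3: "b * (real s + 3) ^ s \<le> 2 ^ (s + 1) * b * (real s + 3) ^ s"
  proof -
    have "1 \<le> (2::real) ^ (s + 1)" by (rule one_le_power) simp
    moreover have "0 \<le> b * (real s + 3) ^ s" using b0 by simp
    ultimately have "1 * (b * (real s + 3) ^ s) \<le> 2 ^ (s + 1) * (b * (real s + 3) ^ s)"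
      by (rule mult_right_mono)
    then show ?thesis by (simp add: mult.assoc)
  qed
  have key0: "1 \<le> 2 ^ (s + 1) * b * (real s + 3) ^ s"
    using f1 f2 f3 by linarith
  have key: "1 \<le> 2 ^ (s + 1) * beta ^ (s + 2) * (real s + 3) ^ s"
    using key0 by (simp only: beta(2))
  have a2: "(2 * beta * alpha) ^ (s + 1) \<le> 1" using al beta by (intro power_le_one) auto
  have "alpha ^ (s + 1) * 1 \<le> alpha ^ (s + 1) * (2 ^ (s + 1) * beta ^ (s + 2) * (real s + 3) ^ s)"
    by (rule mult_left_mono[OF key]) (use al in simp)
  then have "alpha ^ (s + 1) \<le> alpha ^ (s + 1) * (2 ^ (s + 1) * beta ^ (s + 2) * (real s + 3) ^ s)"
    by (simp only: mult_1_right)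
  also have "\<dots> = (2 * beta * alpha) ^ (s + 1) * (beta * (real s + 3) ^ s)"
    by (rule aux_ring)
  also have "\<dots> \<le> beta * (real s + 3) ^ s"
    using a2 beta al by (intro mult_left_le_one_le) auto
  finally have a3: "alpha ^ (s + 1) \<le> beta * (real s + 3) ^ s" .
  have "((real s + 3) / alpha) ^ s \<le> rho ^ s" using rho al by (intro power_mono) auto
  then have r1: "beta * ((real s + 3) / alpha) ^ s \<le> beta * rho ^ s" using beta by (intro mult_left_mono) auto
  have r2: "alpha \<le> beta * ((real s + 3) / alpha) ^ s"
  proof -
    have e1: "beta * ((real s + 3) / alpha) ^ s = beta * (real s + 3) ^ s / alpha ^ s"
      by (simp add: power_divide)
    have "alpha * alpha ^ s \<le> beta * (real s + 3) ^ s" using a3 by simp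
    then have "alpha \<le> beta * (real s + 3) ^ s / alpha ^ s"
      using pos_le_divide_eq[of "alpha ^ s"] al by simp
    then show ?thesis using e1 by simp
  qed
  have "alpha \<le> beta * rho ^ s" using r1 r2 by linarith
  then have "alpha * rho \<le> beta * rho ^ s * rho" using rho0 by (intro mult_right_mono) auto
  then show ?thesis by (simp add: algebra_simps)
qed

lemma numeric:
  fixes t lam n l :: nat and \<alpha> :: real
  assumes t2: "2 \<le> t" and lam1: "1 \<le> lam" and a0: "0 < \<alpha>"
    and eq: "real lam * (2 ^ (t + 1) - 1) / fact t * \<alpha> ^ t
         + 2 * root t (exp 1 * real lam * real (t + 1) * (2 ^ (t + 1) - 1) / fact t) * \<alpha> = 1"
    and lt: "t + 1 \<le> l" and ln: "real l \<le> \<alpha> * root t (real n)"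
  shows "\<exists>M::nat. 2 \<le> M \<and> exp 1 * ((2 ^ (t + 1) - 1) / real M ^ t) * (real (t + 1) * (real lam * real n ^ (t - 1) / fact t)) \<le> 1
          \<and> real lam * (2 ^ (t + 1) - 1) * real l ^ t / fact t + real (M * (2 * l - 2)) < real n"
proof -
  define a where "a = real lam * (2 ^ (t + 1) - 1) / fact t"
  define b where "b = exp 1 * real lam * real (t + 1) * (2 ^ (t + 1) - 1) / fact t"
  define \<beta> where "\<beta> = root t b"
  define \<rho> where "\<rho> = root t (real n)"
  have tp: "0 < t" using t2 by simp
  have g1: "(1::real) \<le> 2 ^ (t + 1) - 1"
  proof -
    have "(2::real) ^ 1 \<le> 2 ^ (t + 1)" by (rule power_increasing) auto
    then show ?thesis by simp
  qed
  have g0: "(0::real) < 2 ^ (t + 1) - 1" using g1 by linarith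
  have a0': "0 < a" unfolding a_def using g0 lam1 by (intro divide_pos_pos mult_pos_pos) auto
  have b0: "0 < b" unfolding b_def using g0 lam1 by (intro divide_pos_pos mult_pos_pos) auto
  have \<beta>p: "0 < \<beta>" unfolding \<beta>_def by (rule real_root_gt_zero[OF tp b0])
  have \<beta>t: "\<beta> ^ t = b" unfolding \<beta>_def using tp b0 by simp
  have \<rho>0: "0 \<le> \<rho>" unfolding \<rho>_def by (rule real_root_ge_zero) simp
  have \<rho>t: "\<rho> ^ t = real n" unfolding \<rho>_def using tp by simp
  have eq': "a * \<alpha> ^ t + 2 * \<beta> * \<alpha> = 1" using eq unfolding a_def b_def \<beta>_def by simp
  have aat: "0 < a * \<alpha> ^ t" using a0' a0 by simp
  have ba: "2 * \<beta> * \<alpha> < 1" using eq' aat by linarith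
  define N where "N = \<beta> * \<rho> ^ (t - 1)"
  have l\<rho>: "real l \<le> \<alpha> * \<rho>" using ln unfolding \<rho>_def .
  obtain s where s: "t = s + 2" using t2 by (metis add.commute le_add_diff_inverse)
  have bfac: "(real s + 3) / fact (s + 2) \<le> b"
  proof -
    have "1 * 1 * 1 \<le> exp 1 * real lam * (2 ^ (t + 1) - 1)"
      using g1 lam1 by (intro mult_mono) (auto simp: one_le_exp_iff)
    then have "real (t + 1) * 1 \<le> real (t + 1) * (exp 1 * real lam * (2 ^ (t + 1) - 1))"
      by (intro mult_left_mono) auto
    then have "real (t + 1) / fact t \<le> real (t + 1) * (exp 1 * real lam * (2 ^ (t + 1) - 1)) / fact t"
      by (intro divide_right_mono) auto
    moreover have "real (t + 1) = real s + 3" using s by simp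
    ultimately show ?thesis unfolding b_def using s by (simp add: ac_simps)
  qed
  have \<rho>ge: "(real s + 3) / \<alpha> \<le> \<rho>"
  proof -
    have "real s + 3 \<le> real l" using lt s by simp
    then have "real s + 3 \<le> \<alpha> * \<rho>" using l\<rho> by linarith
    then show ?thesis using a0 by (simp add: pos_divide_le_eq mult.commute)
  qed
  have \<beta>t': "\<beta> ^ (s + 2) = b" using \<beta>t s by simp
  have "\<alpha> * \<rho> \<le> \<beta> * \<rho> ^ (s + 1)" by (rule NL_aux[OF bfac \<beta>p \<beta>t' a0 ba \<rho>ge])
  then have NL: "real l \<le> N" unfolding N_def using l\<rho> s by simp
  have N3: "3 \<le> N" using NL lt t2 by simp
  define M where "M = nat \<lceil>N\<rceil>"
  have MN: "N \<le> real M" unfolding M_def by (rule real_nat_ceiling_ge)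
  have MN1: "real M \<le> N + 1" unfolding M_def using N3 by (simp add: of_nat_nat)
  have M2: "2 \<le> M" using MN N3 by simp
  have Nt: "N ^ t = b * real n ^ (t - 1)"
  proof -
    have "N ^ t = \<beta> ^ t * (\<rho> ^ (t - 1)) ^ t" unfolding N_def by (simp add: power_mult_distrib)
    also have "(\<rho> ^ (t - 1)) ^ t = (\<rho> ^ t) ^ (t - 1)" by (simp add: power_mult[symmetric] mult.commute)
    finally show ?thesis using \<beta>t \<rho>t by simp
  qed
  have cond: "exp 1 * ((2 ^ (t + 1) - 1) / real M ^ t) * (real (t + 1) * (real lam * real n ^ (t - 1) / fact t)) \<le> 1"
  proof -
    have e: "exp 1 * ((2 ^ (t + 1) - 1) / real M ^ t) * (real (t + 1) * (real lam * real n ^ (t - 1) / fact t))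
        = b * real n ^ (t - 1) / real M ^ t" unfolding b_def by (simp add: field_simps)
    have Np: "0 < N ^ t" using N3 by simp
    have "N ^ t \<le> real M ^ t" using MN N3 by (intro power_mono) auto
    moreover have "0 < real M ^ t" using Np \<open>N ^ t \<le> real M ^ t\<close> by linarith
    ultimately have "b * real n ^ (t - 1) / real M ^ t \<le> b * real n ^ (t - 1) / N ^ t"
      using Np b0 by (intro divide_left_mono mult_pos_pos) auto
    also have "\<dots> = 1"
    proof -
      have "b * real n ^ (t - 1) = N ^ t" using Nt by simp
      then show ?thesis using N3 by simp
    qed
    finally show ?thesis using e by simp
  qed
  have num: "real lam * (2 ^ (t + 1) - 1) * real l ^ t / fact t + real (M * (2 * l - 2)) < real n"
  proof -
    have e1: "real lam * (2 ^ (t + 1) - 1) * real l ^ t / fact t = a * real l ^ t" unfolding a_def by simp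
    have "real l ^ t \<le> (\<alpha> * \<rho>) ^ t" using l\<rho> by (intro power_mono) auto
    then have t1: "a * real l ^ t \<le> a * \<alpha> ^ t * real n" using a0' \<rho>t
      by (metis mult.assoc mult_left_mono less_imp_le power_mult_distrib)
    have "real l * N \<le> \<alpha> * \<rho> * N" using l\<rho> N3 by (intro mult_right_mono) auto
    also have "\<alpha> * \<rho> * N = \<alpha> * \<beta> * \<rho> ^ t" unfolding N_def using tp
      by (simp add: power_eq_if algebra_simps)
    finally have t2': "real l * N \<le> \<alpha> * \<beta> * real n" using \<rho>t by simp
    have l1: "1 \<le> l" using lt by simp
    have e2: "real (M * (2 * l - 2)) = real M * (2 * real l - 2)" using l1 by (simp add: of_nat_diff)
    have "real M * (2 * real l - 2) \<le> (N + 1) * (2 * real l - 2)"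
      using MN1 l1 by (intro mult_right_mono) auto
    also have "\<dots> < 2 * (real l * N)" using NL by (simp add: algebra_simps)
    finally have t3: "real (M * (2 * l - 2)) < 2 * (real l * N)" unfolding e2 .
    have "a * \<alpha> ^ t * real n + 2 * (\<alpha> * \<beta> * real n) = real n"
      using eq' by (metis (no_types, lifting) distrib_right mult.commute mult.left_commute mult_1)
    then show ?thesis using e1 t1 t2' t3 by linarith
  qed
  show ?thesis using M2 cond num by blast
qed

theorem theorem1:
  fixes k t lam n :: nat and \<alpha> :: real and X :: "'a set" and \<B> :: "'a set set"
  assumes "k \<ge> t + 1" and "t \<ge> 2" and "lam \<ge> 1"
    and "\<alpha> > 0"
    and "real lam * (2 ^ (t + 1) - 1) / fact t * \<alpha> ^ t
         + 2 * root t (exp 1 * real lam * real (t + 1) * (2 ^ (t + 1) - 1) / fact t) * \<alpha> = 1"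
    and "n \<ge> k" and "card X = n" and "partial_system k t lam X \<B>"
  shows "\<forall>l::nat. l \<ge> 1 \<and> real l \<le> \<alpha> * root t (real n) \<longrightarrow>
           (\<exists>\<phi>. sequencing n X \<phi> \<and> cyclically_good n \<B> \<phi> l)"
proof (intro allI impI)
  fix l :: nat
  assume hl: "l \<ge> 1 \<and> real l \<le> \<alpha> * root t (real n)"
  have kt: "t + 1 \<le> k" and t2: "2 \<le> t" and t1: "1 \<le> t" using assms(1,2) by auto
  have ps: "partial_system k t lam X \<B>" by (rule assms(8))
  have finX: "finite X" and Bs: "\<And>B. B \<in> \<B> \<Longrightarrow> B \<subseteq> X \<and> card B = k"
    using ps unfolding partial_system_def by auto
  have seqOK: "sequencing n X (\<lambda>i. xs ! i)" if xs: "distinct xs" "set xs = X" for xs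
  proof -
    have "length xs = n" using distinct_card[OF xs(1)] xs(2) assms(7) by simp
    then show ?thesis unfolding sequencing_def using xs
      by (intro bij_betw_nth) (auto simp: atLeast0LessThan)
  qed
  show "\<exists>\<phi>. sequencing n X \<phi> \<and> cyclically_good n \<B> \<phi> l"
  proof (cases "l < k")
    case True
    obtain xs where xs: "distinct xs" "set xs = X" using finite_distinct_list[OF finX] by blast
    have "cyclically_good n \<B> (\<lambda>i. xs ! i) l"
      unfolding cyclically_good_def independent_set_def
    proof (intro allI impI ballI notI)
      fix S B assume S: "card S = l \<and> cyc_consecutive n (\<lambda>i. xs ! i) S" and B: "B \<in> \<B>" and sub: "B \<subseteq> S"
      have "finite S" using S hl by (metis card.infinite not_one_le_zero)
      then have "card B \<le> card S" using sub by (rule card_mono)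
      then show False using S Bs[OF B] True by simp
    qed
    then show ?thesis using seqOK[OF xs] by blast
  next
    case False
    then have lk: "k \<le> l" by simp
    have lt: "t + 1 \<le> l" using lk kt by simp
    obtain M :: nat where M2: "2 \<le> M"
      and cond: "exp 1 * ((2 ^ (t + 1) - 1) / real M ^ t) * (real (t + 1) * (real lam * real n ^ (t - 1) / fact t)) \<le> 1"
      and num: "real lam * (2 ^ (t + 1) - 1) * real l ^ t / fact t + real (M * (2 * l - 2)) < real n"
      using numeric[OF t2 assms(3) assms(4) assms(5) lt] hl by blast
    have cond': "exp 1 * ((2 ^ (t + 1) - 1) / real M ^ t) * (real (t + 1) * (real lam * real (card X) ^ (t - 1) / fact t)) \<le> 1"
      using cond assms(7) by simp
    obtain col where colX: "\<forall>v\<in>X. col v < M"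
      and lll: "\<forall>B\<in>\<B>. \<forall>j<M. \<not> B \<subseteq> {v\<in>X. col v = j \<or> col v = Suc j mod M}"
      using coloring[OF ps kt t1 M2 cond'] by blast
    have l2: "2 \<le> l" using lt t2 by simp
    have num': "real lam * (2 ^ (t + 1) - 1) * real l ^ t / fact t + real (M * (2 * l - 2)) < real (card X)"
      using num assms(7) by simp
    obtain xs where xs: "distinct xs" "set xs = X" and cg: "cyclically_good (length xs) \<B> (\<lambda>i. xs ! i) l"
      using filling[OF ps kt t1 l2 M2 _ _ num', of col] colX lll by blast
    have "length xs = n" using distinct_card[OF xs(1)] xs(2) assms(7) by simp
    then show ?thesis using seqOK[OF xs] cg by auto
  qed
qed

end
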